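(* Let $N$ be a finite-dimensional Hilbert space, let $S$ be the operator in $\ell_2(\mathbb{Z},N)$ defined below, and let $J$ be a fundamental symmetry in $\ell_2(\mathbb{Z},N)$ commuting with $S$, of the form $(J(x_k))_k=J_-x_k$ for $k\le0$ and $(J(x_k))_k=J_+x_k$ for $k\ge1$ with fundamental symmetries $J_\pm$ in $N$. Then the set $\Sigma_J(S)$ of $J$-self-adjoint extensions of $S$ is non-empty if and only if $\dim[(I-J_+)N]=\dim[(I-J_-)N]$.
   Context: Let $A$ be the operator in $\ell_2(\mathbb{Z},N)$ with domain consisting of all sequences $f=(f_k)_{k\in\mathbb{Z}}$ of the form $f_k=x_{k-1}-x_k$ with $(x_k)\in\ell_2(\mathbb{Z},N)$, acting by $(Af)_k=i(x_{k-1}+x_k)$; $S$ is the restriction of $A$ to those $f$ with $x_0=0$. A fundamental symmetry is a bounded $J$ with $J=J^*$, $J^2=I$. A densely defined operator $B$ is $J$-self-adjoint if $B^*J=JB$ (i.e. $B$ is self-adjoint with respect to the indefinite inner product $[x,y]_J=(Jx,y)$). $\Sigma_J(S)$ denotes the set of $J$-self-adjoint operators $B$ with $S\subset B$. *)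

theory Defs
  imports "HOL-Analysis.Analysis"
begin

text \<open>The finite-dimensional Hilbert space N is modelled as complex^'n ('n a finite type)
  with the standard inner product. Elements of l2(Z,N) are sequences int => complex^'n.\<close>

type_synonym 'n seq = "int \<Rightarrow> complex ^ 'n"

definition ip_N :: "complex ^ 'n::finite \<Rightarrow> complex ^ 'n \<Rightarrow> complex" where
  "ip_N u v = (\<Sum>i\<in>UNIV. u $ i * cnj (v $ i))"

definition normsq_N :: "complex ^ 'n::finite \<Rightarrow> real" where
  "normsq_N u = (\<Sum>i\<in>UNIV. (cmod (u $ i))\<^sup>2)"

definition l2 :: "'n::finite seq set" where
  "l2 = {x. (\<lambda>k. normsq_N (x k)) summable_on (UNIV :: int set)}"

definition ip_l2 :: "'n::finite seq \<Rightarrow> 'n seq \<Rightarrow> complex" where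
  "ip_l2 f g = (\<Sum>\<^sub>\<infinity>k\<in>(UNIV :: int set). ip_N (f k) (g k))"

definition norm_l2 :: "'n::finite seq \<Rightarrow> real" where
  "norm_l2 f = sqrt (\<Sum>\<^sub>\<infinity>k\<in>(UNIV :: int set). normsq_N (f k))"

definition sadd :: "'n::finite seq \<Rightarrow> 'n seq \<Rightarrow> 'n seq" where
  "sadd f g = (\<lambda>k. f k + g k)"

definition sscale :: "complex \<Rightarrow> 'n::finite seq \<Rightarrow> 'n seq" where
  "sscale c f = (\<lambda>k. c *s f k)"

text \<open>(Possibly unbounded) linear operators in l2(Z,N) are represented by their graphs:
  a linear subspace of l2 x l2 which is the graph of a function.\<close>

definition is_operator :: "('n::finite seq \<times> 'n seq) set \<Rightarrow> bool" where
  "is_operator B \<longleftrightarrow> B \<subseteq> l2 \<times> l2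
     \<and> (\<forall>f g h. (f, g) \<in> B \<longrightarrow> (f, h) \<in> B \<longrightarrow> g = h)
     \<and> (\<lambda>k. 0, \<lambda>k. 0) \<in> B
     \<and> (\<forall>f g f' g'. (f, g) \<in> B \<longrightarrow> (f', g') \<in> B \<longrightarrow> (sadd f f', sadd g g') \<in> B)
     \<and> (\<forall>f g c. (f, g) \<in> B \<longrightarrow> (sscale c f, sscale c g) \<in> B)"

definition dom_op :: "('n::finite seq \<times> 'n seq) set \<Rightarrow> 'n seq set" where
  "dom_op B = fst ` B"

definition dense_in_l2 :: "'n::finite seq set \<Rightarrow> bool" where
  "dense_in_l2 D \<longleftrightarrow> D \<subseteq> l2 \<and>
     (\<forall>f\<in>l2. \<forall>e>0. \<exists>g\<in>D. norm_l2 (\<lambda>k. f k - g k) < e)"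

definition densely_defined :: "('n::finite seq \<times> 'n seq) set \<Rightarrow> bool" where
  "densely_defined B \<longleftrightarrow> is_operator B \<and> dense_in_l2 (dom_op B)"

definition adjoint_op :: "('n::finite seq \<times> 'n seq) set \<Rightarrow> ('n seq \<times> 'n seq) set" where
  "adjoint_op B = {(g, h). g \<in> l2 \<and> h \<in> l2 \<and> (\<forall>(f, u)\<in>B. ip_l2 u g = ip_l2 f h)}"

definition op_comp_right :: "('n::finite seq \<times> 'n seq) set \<Rightarrow> ('n seq \<Rightarrow> 'n seq) \<Rightarrow> ('n seq \<times> 'n seq) set" where
  "op_comp_right B J = {(f, h). f \<in> l2 \<and> (J f, h) \<in> B}"

definition op_comp_left :: "('n seq \<Rightarrow> 'n seq) \<Rightarrow> ('n::finite seq \<times> 'n seq) set \<Rightarrow> ('n seq \<times> 'n seq) set" where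
  "op_comp_left J B = {(f, J g) | f g. (f, g) \<in> B}"

definition J_selfadjoint :: "('n::finite seq \<Rightarrow> 'n seq) \<Rightarrow> ('n seq \<times> 'n seq) set \<Rightarrow> bool" where
  "J_selfadjoint J B \<longleftrightarrow> densely_defined B \<and> op_comp_right (adjoint_op B) J = op_comp_left J B"

definition Sigma_J :: "('n::finite seq \<Rightarrow> 'n seq) \<Rightarrow> ('n seq \<times> 'n seq) set \<Rightarrow> ('n seq \<times> 'n seq) set set" where
  "Sigma_J J S = {B. J_selfadjoint J B \<and> S \<subseteq> B}"

definition cadj :: "complex ^ 'n ^ 'n \<Rightarrow> complex ^ 'n ^ 'n" where
  "cadj M = (\<chi> i j. cnj (M $ j $ i))"

definition fund_sym_N :: "complex ^ 'n ^ 'n \<Rightarrow> bool" where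
  "fund_sym_N M \<longleftrightarrow> cadj M = M \<and> M ** M = mat 1"

definition fund_sym_l2 :: "('n::finite seq \<Rightarrow> 'n seq) \<Rightarrow> bool" where
  "fund_sym_l2 J \<longleftrightarrow> (\<forall>f\<in>l2. J f \<in> l2)
     \<and> (\<forall>f\<in>l2. \<forall>g\<in>l2. J (sadd f g) = sadd (J f) (J g))
     \<and> (\<forall>f\<in>l2. \<forall>c. J (sscale c f) = sscale c (J f))
     \<and> (\<exists>C. \<forall>f\<in>l2. norm_l2 (J f) \<le> C * norm_l2 f)
     \<and> (\<forall>f\<in>l2. \<forall>g\<in>l2. ip_l2 (J f) g = ip_l2 f (J g))
     \<and> (\<forall>f\<in>l2. J (J f) = f)"

definition op_A :: "('n::finite seq \<times> 'n seq) set" where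
  "op_A = {(\<lambda>k. x (k - 1) - x k, \<lambda>k. \<i> *s (x (k - 1) + x k)) | x. x \<in> l2}"

definition op_S :: "('n::finite seq \<times> 'n seq) set" where
  "op_S = {(\<lambda>k. x (k - 1) - x k, \<lambda>k. \<i> *s (x (k - 1) + x k)) | x. x \<in> l2 \<and> x 0 = 0}"

definition commutes_with :: "('n::finite seq \<Rightarrow> 'n seq) \<Rightarrow> ('n seq \<times> 'n seq) set \<Rightarrow> bool" where
  "commutes_with J S \<longleftrightarrow> op_comp_left J S \<subseteq> op_comp_right S J"

definition block_J :: "complex ^ 'n ^ 'n \<Rightarrow> complex ^ 'n ^ 'n \<Rightarrow> 'n::finite seq \<Rightarrow> 'n seq" where
  "block_J Jm Jp x = (\<lambda>k. if k \<le> 0 then Jm *v x k else Jp *v x k)"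

end

theory Submission
  imports Defs "HOL-Analysis.Product_Vector"
begin


lemma ip_N_add_left: "ip_N (u + v) w = ip_N u w + ip_N v w"
  by (simp add: ip_N_def sum.distrib distrib_right)
lemma ip_N_add_right: "ip_N w (u + v) = ip_N w u + ip_N w v"
  by (simp add: ip_N_def sum.distrib distrib_left)
lemma ip_N_diff_left: "ip_N (u - v) w = ip_N u w - ip_N v w"
  by (simp add: ip_N_def sum_subtractf left_diff_distrib)
lemma ip_N_diff_right: "ip_N w (u - v) = ip_N w u - ip_N w v"
  by (simp add: ip_N_def sum_subtractf right_diff_distrib)
lemma ip_N_scale_left: "ip_N (c *s u) w = c * ip_N u w"
  by (simp add: ip_N_def sum_distrib_left mult.assoc)
lemma ip_N_scale_right: "ip_N w (c *s u) = cnj c * ip_N w u"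
  by (simp add: ip_N_def sum_distrib_left algebra_simps)
lemma ip_N_zero_left[simp]: "ip_N 0 w = 0" by (simp add: ip_N_def)
lemma ip_N_zero_right[simp]: "ip_N w 0 = 0" by (simp add: ip_N_def)
lemma ip_N_neg_left: "ip_N (- u) w = - ip_N u w" by (simp add: ip_N_def sum_negf)
lemma ip_N_neg_right: "ip_N w (- u) = - ip_N w u" by (simp add: ip_N_def sum_negf)
lemma ip_N_sym: "ip_N v u = cnj (ip_N u v)"
  by (simp add: ip_N_def mult.commute)
lemma normsq_N_nonneg: "normsq_N u \<ge> 0" by (simp add: normsq_N_def sum_nonneg)
lemma ip_N_self: "ip_N u u = of_real (normsq_N u)"
  by (simp add: ip_N_def normsq_N_def flip: complex_norm_square)
lemma normsq_N_zero_iff: "normsq_N u = 0 \<longleftrightarrow> u = 0"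
  by (simp add: normsq_N_def sum_nonneg_eq_0_iff vec_eq_iff)
lemma ip_N_self_zero: "ip_N u u = 0 \<longleftrightarrow> u = 0"
  by (simp add: ip_N_self normsq_N_zero_iff)
lemma ip_N_bound: "cmod (ip_N u v) \<le> (normsq_N u + normsq_N v) / 2"
proof -
  have "cmod (ip_N u v) \<le> (\<Sum>i\<in>UNIV. cmod (u $ i * cnj (v $ i)))"
    unfolding ip_N_def by (rule norm_sum)
  also have "\<dots> \<le> (\<Sum>i\<in>UNIV. ((cmod (u$i))\<^sup>2 + (cmod (v$i))\<^sup>2) / 2)"
  proof (rule sum_mono)
    fix i
    have "0 \<le> (cmod (u$i) - cmod (v$i))\<^sup>2" by simp
    then show "cmod (u $ i * cnj (v $ i)) \<le> ((cmod (u$i))\<^sup>2 + (cmod (v$i))\<^sup>2) / 2"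
      by (simp add: norm_mult power2_eq_square algebra_simps)
  qed
  also have "\<dots> = (normsq_N u + normsq_N v) / 2"
    by (simp add: normsq_N_def sum.distrib flip: sum_divide_distrib)
  finally show ?thesis .
qed
lemma normsq_N_add: "normsq_N (u + v) \<le> 2 * normsq_N u + 2 * normsq_N v"
proof -
  have "normsq_N (u + v) \<le> (\<Sum>i\<in>UNIV. 2 * (cmod (u$i))\<^sup>2 + 2 * (cmod (v$i))\<^sup>2)"
    unfolding normsq_N_def
  proof (rule sum_mono)
    fix i
    have a: "cmod (u$i + v$i) \<le> cmod (u$i) + cmod (v$i)" by (rule norm_triangle_ineq)
    have "(cmod (u$i + v$i))\<^sup>2 \<le> (cmod (u$i) + cmod (v$i))\<^sup>2"
      using a by (simp add: power_mono)
    also have "\<dots> \<le> 2 * (cmod (u$i))\<^sup>2 + 2 * (cmod (v$i))\<^sup>2"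
      using sum_squares_bound[of "cmod (u$i)" "cmod (v$i)"]
      by (smt (verit) power2_sum sum_power2_ge_zero) 
    finally show "(cmod ((u + v) $ i))\<^sup>2 \<le> 2 * (cmod (u$i))\<^sup>2 + 2 * (cmod (v$i))\<^sup>2" by simp
  qed
  also have "\<dots> = 2 * normsq_N u + 2 * normsq_N v"
    by (simp add: normsq_N_def sum.distrib sum_distrib_left)
  finally show ?thesis .
qed
lemma normsq_N_scale: "normsq_N (c *s u) = (cmod c)\<^sup>2 * normsq_N u"
  by (simp add: normsq_N_def sum_distrib_left norm_mult power_mult_distrib)
lemma normsq_N_neg: "normsq_N (- u) = normsq_N u"
  by (simp add: normsq_N_def)
lemma normsq_N_ip: "normsq_N u = Re (ip_N u u)"
  by (simp add: ip_N_self)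

lemma ip_N_mat: "ip_N (M *v u) w = ip_N u (cadj M *v w)"
proof -
  have "ip_N (M *v u) w = (\<Sum>i\<in>UNIV. \<Sum>j\<in>UNIV. M$i$j * u$j * cnj (w$i))"
    unfolding ip_N_def matrix_vector_mult_def by (simp add: sum_distrib_right)
  also have "\<dots> = (\<Sum>j\<in>UNIV. \<Sum>i\<in>UNIV. M$i$j * u$j * cnj (w$i))"
    by (rule sum.swap)
  also have "\<dots> = ip_N u (cadj M *v w)"
    unfolding ip_N_def matrix_vector_mult_def cadj_def
    by (simp add: sum_distrib_left mult_ac)
  finally show ?thesis .
qed

lemma ip_N_herm: "cadj M = M \<Longrightarrow> ip_N (M *v u) w = ip_N u (M *v w)"
  using ip_N_mat by metis



lemma l2_iff: "f \<in> l2 \<longleftrightarrow> (\<lambda>k. normsq_N (f k)) summable_on UNIV"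
  by (simp add: l2_def)

lemma l2_add: "f \<in> l2 \<Longrightarrow> g \<in> l2 \<Longrightarrow> (\<lambda>k. f k + g k) \<in> l2"
  unfolding l2_iff
  apply (rule summable_on_comparison_test[where f="\<lambda>k. 2 * normsq_N (f k) + 2 * normsq_N (g k)"])
  by (auto intro!: summable_on_add summable_on_cmult_right normsq_N_add normsq_N_nonneg)

lemma l2_scale: "f \<in> l2 \<Longrightarrow> (\<lambda>k. c *s f k) \<in> l2"
  unfolding l2_iff normsq_N_scale by (rule summable_on_cmult_right)

lemma l2_neg: "f \<in> l2 \<Longrightarrow> (\<lambda>k. - f k) \<in> l2"
  unfolding l2_iff normsq_N_neg .

lemma l2_diff: "f \<in> l2 \<Longrightarrow> g \<in> l2 \<Longrightarrow> (\<lambda>k. f k - g k) \<in> l2"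
  using l2_add[OF _ l2_neg[of g], of f] by simp

lemma l2_zero[simp]: "(\<lambda>k. 0) \<in> l2"
  by (simp add: l2_iff normsq_N_def)

lemma l2_shift: "f \<in> l2 \<Longrightarrow> (\<lambda>k. f (k + c)) \<in> l2"
  unfolding l2_iff
  using summable_on_reindex_bij_betw[of "\<lambda>k::int. k + c" UNIV UNIV "\<lambda>k. normsq_N (f k)"]
  by (simp add: bij_betw_def inj_on_def surj_def)

lemma l2_finite: "finite {k. f k \<noteq> 0} \<Longrightarrow> f \<in> l2"
  unfolding l2_iff
  by (rule finite_nonzero_values_imp_summable_on) (auto elim!: rev_finite_subset simp: normsq_N_def)

lemma l2_upd: "f \<in> l2 \<Longrightarrow> f(a := v) \<in> l2"
proof -
  assume f: "f \<in> l2"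
  have U: "UNIV = insert a (UNIV - {a})" by auto
  have "(\<lambda>k. normsq_N (f k)) summable_on (UNIV - {a})"
    using f unfolding l2_iff by (metis U summable_on_insert_iff)
  then have "(\<lambda>k. normsq_N ((f(a:=v)) k)) summable_on (UNIV - {a})"
    by (rule summable_on_cong[THEN iffD1, rotated]) auto
  then show ?thesis unfolding l2_iff by (metis U summable_on_insert_iff)
qed

lemma ip_summable: "f \<in> l2 \<Longrightarrow> g \<in> l2 \<Longrightarrow> (\<lambda>k. ip_N (f k) (g k)) summable_on UNIV"
proof -
  assume f: "f \<in> l2" and g: "g \<in> l2"
  have "(\<lambda>k. (1/2) * (normsq_N (f k) + normsq_N (g k))) summable_on UNIV"
    using f g unfolding l2_iff by (intro summable_on_cmult_right summable_on_add)
  then have h: "(\<lambda>k. norm (complex_of_real ((1/2) * (normsq_N (f k) + normsq_N (g k))))) summable_on UNIV"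
  proof -
    have "norm (complex_of_real ((1/2) * (normsq_N (f k) + normsq_N (g k)))) = (1/2) * (normsq_N (f k) + normsq_N (g k))" for k
      by (simp only: norm_of_real) (simp add: abs_of_nonneg add_nonneg_nonneg normsq_N_nonneg)
    then show ?thesis using \<open>(\<lambda>k. (1/2) * (normsq_N (f k) + normsq_N (g k))) summable_on UNIV\<close> by simp
  qed
  have "(\<lambda>k. norm (ip_N (f k) (g k))) summable_on UNIV"
    apply (rule Infinite_Sum.abs_summable_on_comparison_test[OF h])
    subgoal for k using ip_N_bound[of "f k" "g k"] normsq_N_nonneg[of "f k"] normsq_N_nonneg[of "g k"]
      by (simp only: norm_of_real)
    done
  then show ?thesis unfolding summable_on_iff_abs_summable_on_complex .
qed

lemma summable_on_diff':
  fixes f g :: "'a \<Rightarrow> 'b::{topological_ab_group_add}"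
  shows "f summable_on A \<Longrightarrow> g summable_on A \<Longrightarrow> (\<lambda>x. f x - g x) summable_on A"
  using summable_on_add[of f A "\<lambda>x. - g x"] summable_on_uminus[of g A] by simp

lemma infsum_diff':
  fixes f g :: "'a \<Rightarrow> 'b::{topological_ab_group_add, t2_space}"
  shows "f summable_on A \<Longrightarrow> g summable_on A \<Longrightarrow> infsum (\<lambda>x. f x - g x) A = infsum f A - infsum g A"
  using infsum_add[of f A "\<lambda>x. - g x"] summable_on_uminus[of g A] infsum_uminus[of g A] by simp

definition shf :: "'n::finite seq \<Rightarrow> complex ^ 'n \<Rightarrow> 'n seq" where
  "shf y z = (\<lambda>k. if k = 1 then z else y (k - 1))"
definition G1 :: "'n::finite seq \<Rightarrow> complex ^ 'n \<Rightarrow> 'n seq" where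
  "G1 y z = (\<lambda>k. shf y z k - y k)"
definition G2 :: "'n::finite seq \<Rightarrow> complex ^ 'n \<Rightarrow> 'n seq" where
  "G2 y z = (\<lambda>k. \<i> *s (shf y z k + y k))"

lemma l2_shf: "y \<in> l2 \<Longrightarrow> shf y z \<in> l2"
proof -
  assume "y \<in> l2"
  then have "(\<lambda>k. y (k + (-1))) \<in> l2" by (rule l2_shift)
  then have "(\<lambda>k. y (k - 1))(1 := z) \<in> l2" using l2_upd[of "\<lambda>k. y (k + (-1))" 1 z] by simp
  moreover have "(\<lambda>k. y (k - 1))(1 := z) = shf y z" by (auto simp: shf_def)
  ultimately show ?thesis by simp
qed

lemma l2_G1: "y \<in> l2 \<Longrightarrow> G1 y z \<in> l2"
  unfolding G1_def by (intro l2_diff l2_shf)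
lemma l2_G2: "y \<in> l2 \<Longrightarrow> G2 y z \<in> l2"
  unfolding G2_def by (intro l2_scale l2_add l2_shf)

lemma infsum_shift1: "infsum (\<lambda>k::int. a (k - 1)) UNIV = infsum a UNIV"
  using infsum_reindex_bij_betw[of "\<lambda>k::int. k - 1" UNIV UNIV a]
  by (simp add: bij_betw_def inj_on_def surj_def)

lemma BF:
  assumes y: "y \<in> l2" and y': "y' \<in> l2"
  shows "ip_l2 (G2 y' z') (G1 y z) - ip_l2 (G1 y' z') (G2 y z)
       = 2 * \<i> * (ip_N z' z - ip_N (y' 0) (y 0))"
proof -
  let ?s = "shf y z" and ?s' = "shf y' z'"
  have s: "?s \<in> l2" and s': "?s' \<in> l2" using y y' by (auto intro: l2_shf)
  have pt: "ip_N (G2 y' z' k) (G1 y z k) - ip_N (G1 y' z' k) (G2 y z k)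
      = 2 * \<i> * (ip_N (?s' k) (?s k) - ip_N (y' k) (y k))" for k
    unfolding G1_def G2_def
    by (simp add: ip_N_add_left ip_N_add_right ip_N_diff_left ip_N_diff_right ip_N_scale_left
        ip_N_scale_right algebra_simps)
  have sa: "(\<lambda>k. ip_N (G2 y' z' k) (G1 y z k)) summable_on UNIV"
    using y y' by (intro ip_summable l2_G1 l2_G2)
  have sb: "(\<lambda>k. ip_N (G1 y' z' k) (G2 y z k)) summable_on UNIV"
    using y y' by (intro ip_summable l2_G1 l2_G2)
  have ss: "(\<lambda>k. ip_N (?s' k) (?s k)) summable_on UNIV" by (rule ip_summable[OF s' s])
  have sy: "(\<lambda>k. ip_N (y' k) (y k)) summable_on UNIV" by (rule ip_summable[OF y' y])
  have "ip_l2 (G2 y' z') (G1 y z) - ip_l2 (G1 y' z') (G2 y z)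
      = infsum (\<lambda>k. ip_N (G2 y' z' k) (G1 y z k) - ip_N (G1 y' z' k) (G2 y z k)) UNIV"
    unfolding ip_l2_def using infsum_diff'[OF sa sb] by simp
  also have "\<dots> = infsum (\<lambda>k. 2 * \<i> * (ip_N (?s' k) (?s k) - ip_N (y' k) (y k))) UNIV"
    by (simp add: pt)
  also have "\<dots> = 2 * \<i> * (infsum (\<lambda>k. ip_N (?s' k) (?s k)) UNIV - infsum (\<lambda>k. ip_N (y' k) (y k)) UNIV)"
    by (subst infsum_cmult_right) (auto intro!: summable_on_diff' ss sy simp: infsum_diff'[OF ss sy])
  also have "infsum (\<lambda>k. ip_N (?s' k) (?s k)) UNIV
      = infsum (\<lambda>k. ip_N (y' (k - 1)) (y (k - 1)) + (if k = 1 then ip_N z' z - ip_N (y' 0) (y 0) else 0)) UNIV"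
    by (rule infsum_cong) (auto simp: shf_def)
  also have "\<dots> = infsum (\<lambda>k. ip_N (y' (k - 1)) (y (k - 1))) UNIV + (ip_N z' z - ip_N (y' 0) (y 0))"
  proof (subst infsum_add)
    show "(\<lambda>k. ip_N (y' (k - 1)) (y (k - 1))) summable_on UNIV"
      using l2_shift[OF y', of "-1"] l2_shift[OF y, of "-1"] by (auto dest: ip_summable)
    show "(\<lambda>k::int. if k = 1 then ip_N z' z - ip_N (y' 0) (y 0) else 0) summable_on UNIV"
      by (rule finite_nonzero_values_imp_summable_on) auto
    have "infsum (\<lambda>k::int. if k = 1 then ip_N z' z - ip_N (y' 0) (y 0) else 0) UNIV
        = infsum (\<lambda>k::int. if k = 1 then ip_N z' z - ip_N (y' 0) (y 0) else 0) {1}"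
      by (rule infsum_cong_neutral) auto
    then show "infsum (\<lambda>k. ip_N (y' (k - 1)) (y (k - 1))) UNIV +
      infsum (\<lambda>k::int. if k = 1 then ip_N z' z - ip_N (y' 0) (y 0) else 0) UNIV =
      infsum (\<lambda>k. ip_N (y' (k - 1)) (y (k - 1))) UNIV + (ip_N z' z - ip_N (y' 0) (y 0))"
      by simp
  qed
  also have "infsum (\<lambda>k. ip_N (y' (k - 1)) (y (k - 1))) UNIV = infsum (\<lambda>k. ip_N (y' k) (y k)) UNIV"
    by (rule infsum_shift1[where a="\<lambda>k. ip_N (y' k) (y k)"])
  finally show ?thesis by (simp add: algebra_simps)
qed



definition Bset :: "((complex ^ 'n) \<times> (complex ^ 'n)) set \<Rightarrow> ('n::finite seq \<times> 'n seq) set" where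
  "Bset L = {(G1 y z, G2 y z) | y z. y \<in> l2 \<and> (y 0, z) \<in> L}"

definition dlt :: "int \<Rightarrow> complex ^ 'n \<Rightarrow> 'n::finite seq" where
  "dlt j u = (\<lambda>k. if k = j then u else 0)"

lemma l2_dlt: "dlt j u \<in> l2"
  by (rule l2_finite) (auto simp: dlt_def intro: rev_finite_subset[of "{j}"])

lemma ip_l2_fin:
  assumes "finite F" "\<And>k. k \<notin> F \<Longrightarrow> x k = 0"
  shows "ip_l2 x g = (\<Sum>k\<in>F. ip_N (x k) (g k))"
proof -
  have "ip_l2 x g = infsum (\<lambda>k. ip_N (x k) (g k)) F"
    unfolding ip_l2_def by (rule infsum_cong_neutral) (use assms in auto)
  then show ?thesis using assms by simp
qed

lemma shf_x0: "x 0 = 0 \<Longrightarrow> shf x 0 = (\<lambda>k. x (k - 1))"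
  by (auto simp: shf_def)

lemma op_S_eq: "op_S = Bset {(0,0)}"
proof -
  have "op_S = {(G1 x 0, G2 x 0) | x. x \<in> l2 \<and> x 0 = 0}"
    unfolding op_S_def G1_def G2_def
    apply (rule set_eqI)
    apply (rule iffI)
     apply (clarsimp, rule_tac x=x in exI, simp add: shf_x0)
    apply (clarsimp, rule_tac x=x in exI, simp add: shf_x0)
    done
  also have "\<dots> = Bset {(0,0)}" unfolding Bset_def by auto
  finally show ?thesis .
qed

lemma y_from_G: "y k = (1/2) *s ((-\<i>) *s G2 y z k - G1 y z k)"
  by (simp add: G1_def G2_def vec_eq_iff field_simps)

lemma z_from_G: "z = G1 y z 1 + y 1"
  by (simp add: G1_def shf_def)

lemma G_inj: "G1 y z = G1 y' z' \<Longrightarrow> G2 y z = G2 y' z' \<Longrightarrow> y = y' \<and> z = z'"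
proof -
  assume a: "G1 y z = G1 y' z'" "G2 y z = G2 y' z'"
  have "y = y'"
    by (rule ext) (metis y_from_G a)
  moreover have "z = z'" by (metis z_from_G a calculation)
  ultimately show ?thesis by simp
qed

lemma G1_add: "G1 (\<lambda>k. y k + y' k) (z + z') = (\<lambda>k. G1 y z k + G1 y' z' k)"
  by (auto simp: G1_def shf_def)
lemma G2_add: "G2 (\<lambda>k. y k + y' k) (z + z') = (\<lambda>k. G2 y z k + G2 y' z' k)"
  by (auto simp: G2_def shf_def vector_add_ldistrib algebra_simps)
lemma G1_scale: "G1 (\<lambda>k. c *s y k) (c *s z) = (\<lambda>k. c *s G1 y z k)"
  by (auto simp: G1_def shf_def vector_ssub_ldistrib)
lemma G2_scale: "G2 (\<lambda>k. c *s y k) (c *s z) = (\<lambda>k. c *s G2 y z k)"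
  by (auto simp: G2_def shf_def vector_add_ldistrib vec_eq_iff)
lemma G1_diff: "G1 (\<lambda>k. y k - y' k) (z - z') = (\<lambda>k. G1 y z k - G1 y' z' k)"
  by (auto simp: G1_def shf_def)
lemma G2_diff: "G2 (\<lambda>k. y k - y' k) (z - z') = (\<lambda>k. G2 y z k - G2 y' z' k)"
  by (auto simp: G2_def shf_def vec_eq_iff algebra_simps)
lemma G_zero: "G1 (\<lambda>k. 0) 0 = (\<lambda>k. 0)" "G2 (\<lambda>k. 0) 0 = (\<lambda>k. 0)"
  by (auto simp: G1_def G2_def shf_def)

lemma const_l2_zero:
  assumes "f \<in> l2" "infinite A" "\<And>k. k \<in> A \<Longrightarrow> f k = c"
  shows "c = 0"
proof (rule ccontr)
  assume c: "c \<noteq> 0"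
  have "(\<lambda>k. normsq_N (f k)) summable_on A"
    using assms(1) unfolding l2_iff by (rule summable_on_subset_banach) auto
  then have "(\<lambda>k. normsq_N c) summable_on A"
    by (rule summable_on_cong[THEN iffD1, rotated]) (use assms(3) in auto)
  moreover have "normsq_N c \<noteq> 0" using c normsq_N_zero_iff by auto
  ultimately show False using infsum_diverge_constant[OF assms(2)] by blast
qed

lemma G1_zero:
  assumes "G1 w c = (\<lambda>k. 0)" "w \<in> l2"
  shows "w = (\<lambda>k. 0) \<and> c = 0"
proof -
  have rel: "w (k - 1) = w k" if "k \<noteq> 1" for k
    using fun_cong[OF assms(1), of k] that by (simp add: G1_def shf_def)
  have neg: "w (- int n) = w 0" for n
  proof (induction n)
    case (Suc n)
    have e: "- int (Suc n) = - int n - 1" by simp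
    have "w (- int (Suc n)) = w (- int n)" unfolding e by (rule rel) simp
    then show ?case using Suc by simp
  qed simp
  have pos: "w (1 + int n) = w 1" for n
  proof (induction n)
    case (Suc n)
    have e: "1 + int n = (2 + int n) - 1" "1 + int (Suc n) = 2 + int n" by simp_all
    have "w (1 + int (Suc n)) = w (1 + int n)" unfolding e by (rule rel[symmetric]) simp
    then show ?case using Suc by simp
  qed simp
  have i1: "infinite {k::int. k \<le> 0}"
    using infinite_Iic[where 'a=int] by (simp add: atMost_def)
  have i2: "infinite {k::int. 1 \<le> k}"
    using infinite_Ici[where 'a=int] by (simp add: atLeast_def)
  have w0: "w 0 = 0"
  proof (rule const_l2_zero[OF assms(2) i1])
    fix k assume "k \<in> {k::int. k \<le> 0}"
    then have "k = - int (nat (-k))" by simp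
    then show "w k = w 0" using neg by metis
  qed
  have w1: "w 1 = 0"
  proof (rule const_l2_zero[OF assms(2) i2])
    fix k assume "k \<in> {k::int. 1 \<le> k}"
    then have "k = 1 + int (nat (k - 1))" by simp
    then show "w k = w 1" using pos by metis
  qed
  have "w k = 0" for k
  proof (cases "k \<le> 0")
    case True
    then have "k = - int (nat (-k))" by simp
    then show ?thesis using neg w0 by metis
  next
    case False
    then have "k = 1 + int (nat (k - 1))" by simp
    then show ?thesis using pos w1 by metis
  qed
  moreover have "c = 0" using fun_cong[OF assms(1), of 1] w1 by (simp add: G1_def shf_def)
  ultimately show ?thesis by auto
qed



lemma Bset_memI: "y \<in> l2 \<Longrightarrow> (y 0, z) \<in> L \<Longrightarrow> (G1 y z, G2 y z) \<in> Bset L"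
  unfolding Bset_def by blast

lemma G_dlt:
  assumes "j \<noteq> 0"
  shows "G1 (dlt j u) 0 = (\<lambda>k. if k = j + 1 then u else if k = j then - u else 0)"
    and "G2 (dlt j u) 0 = (\<lambda>k. if k = j + 1 then \<i> *s u else if k = j then \<i> *s u else 0)"
  using assms by (auto simp: G1_def G2_def shf_def dlt_def)

lemma rel_from_adj:
  assumes H: "\<forall>(f, u)\<in>Bset L. ip_l2 u g = ip_l2 f h" and L0: "(0,0) \<in> L" and j: "j \<noteq> 0"
  shows "(-\<i>) *s (g (j+1) + g j) = h (j+1) - h j"
proof -
  define w where "w = (-\<i>) *s (g (j+1) + g j) - (h (j+1) - h j)"
  have mem: "(G1 (dlt j w) 0, G2 (dlt j w) 0) \<in> Bset L"
    by (rule Bset_memI[OF l2_dlt]) (use L0 j in \<open>simp add: dlt_def\<close>)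
  have F: "finite {j, j+1}" by simp
  have e1: "ip_l2 (G2 (dlt j w) 0) g = ip_N (\<i> *s w) (g j) + ip_N (\<i> *s w) (g (j+1))"
    by (subst ip_l2_fin[OF F]) (auto simp: G_dlt[OF j])
  have e2: "ip_l2 (G1 (dlt j w) 0) h = ip_N (- w) (h j) + ip_N w (h (j+1))"
    by (subst ip_l2_fin[OF F]) (auto simp: G_dlt[OF j])
  have "ip_N (\<i> *s w) (g j) + ip_N (\<i> *s w) (g (j+1)) = ip_N (- w) (h j) + ip_N w (h (j+1))"
    using H mem e1 e2 by fastforce
  then have E: "\<i> * ip_N w (g j) + \<i> * ip_N w (g (j+1)) = - ip_N w (h j) + ip_N w (h (j+1))"
    by (simp add: ip_N_scale_left ip_N_neg_left)
  have "ip_N w w = \<i> * ip_N w (g (j+1)) + \<i> * ip_N w (g j) - ip_N w (h (j+1)) + ip_N w (h j)"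
    by (subst (2) w_def) (simp add: ip_N_add_right ip_N_diff_right ip_N_scale_right ip_N_neg_right)
  then have "ip_N w w = 0" using E by (simp add: algebra_simps)
  then have "w = 0" by (simp add: ip_N_self_zero)
  then show ?thesis by (simp add: w_def)
qed

lemma adj_Bset:
  assumes L0: "(0,0) \<in> L"
  shows "(g, h) \<in> adjoint_op (Bset L) \<longleftrightarrow>
    (\<exists>y z. y \<in> l2 \<and> g = G1 y z \<and> h = G2 y z \<and> (\<forall>(b,a)\<in>L. ip_N a z = ip_N b (y 0)))"
proof
  assume "\<exists>y z. y \<in> l2 \<and> g = G1 y z \<and> h = G2 y z \<and> (\<forall>(b,a)\<in>L. ip_N a z = ip_N b (y 0))"
  then obtain y z where y: "y \<in> l2" and gh: "g = G1 y z" "h = G2 y z"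
    and c: "\<forall>(b,a)\<in>L. ip_N a z = ip_N b (y 0)" by blast
  have "ip_l2 u g = ip_l2 f h" if "(f, u) \<in> Bset L" for f u
  proof -
    from that obtain y' z' where y': "y' \<in> l2" "(y' 0, z') \<in> L" and fu: "f = G1 y' z'" "u = G2 y' z'"
      unfolding Bset_def by blast
    have "ip_N z' z = ip_N (y' 0) (y 0)" using c y'(2) by blast
    then show ?thesis using BF[OF y y'(1), of z' z] fu gh by simp
  qed
  then show "(g, h) \<in> adjoint_op (Bset L)"
    unfolding adjoint_op_def using gh y l2_G1 l2_G2 by blast
next
  assume "(g, h) \<in> adjoint_op (Bset L)"
  then have g: "g \<in> l2" and h: "h \<in> l2" and H: "\<forall>(f, u)\<in>Bset L. ip_l2 u g = ip_l2 f h"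
    unfolding adjoint_op_def by auto
  define y where "y = (\<lambda>k. (1 / (2 * \<i>)) *s (h k - \<i> *s g k))"
  define z where "z = (1 / (2 * \<i>)) *s (h 1 + \<i> *s g 1)"
  have y2: "y \<in> l2" unfolding y_def by (intro l2_scale l2_diff g h)
  have shf: "shf y z k = (1 / (2 * \<i>)) *s (h k + \<i> *s g k)" for k
  proof (cases "k = 1")
    case True then show ?thesis by (simp add: shf_def z_def)
  next
    case False
    then have "k - 1 \<noteq> 0" by simp
    from rel_from_adj[OF H L0 this] have r: "(-\<i>) *s (g k + g (k-1)) = h k - h (k-1)" by simp
    have eq: "h (k-1) - \<i> *s g (k-1) = h k + \<i> *s g k"
      using r by (simp add: vec_eq_iff algebra_simps)
    have "y (k - 1) = (1 / (2 * \<i>)) *s (h k + \<i> *s g k)"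
      unfolding y_def by (simp only: eq)
    then show ?thesis using False by (simp add: shf_def)
  qed
  have gG: "g = G1 y z"
    by (rule ext) (simp only: G1_def shf, simp add: y_def vec_eq_iff field_simps)
  have hG: "h = G2 y z"
    by (rule ext) (simp only: G2_def shf, simp add: y_def vec_eq_iff field_simps)
  have "ip_N a z = ip_N b (y 0)" if "(b, a) \<in> L" for a b
  proof -
    have mem: "(G1 (dlt 0 b) a, G2 (dlt 0 b) a) \<in> Bset L"
      by (rule Bset_memI[OF l2_dlt]) (use that in \<open>simp add: dlt_def\<close>)
    then have "ip_l2 (G2 (dlt 0 b) a) g = ip_l2 (G1 (dlt 0 b) a) h" using H by blast
    then have "2 * \<i> * (ip_N a z - ip_N (dlt 0 b 0) (y 0)) = 0"
      using BF[OF y2 l2_dlt, of 0 b a z] gG hG by simp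
    then show ?thesis by (simp add: dlt_def)
  qed
  then show "\<exists>y z. y \<in> l2 \<and> g = G1 y z \<and> h = G2 y z \<and> (\<forall>(b,a)\<in>L. ip_N a z = ip_N b (y 0))"
    using y2 gG hG by blast
qed



lemma JG1: "block_J Jm Jp (G1 y z) = G1 (block_J Jm Jp y) (Jp *v z)"
  by (rule ext) (auto simp: block_J_def G1_def shf_def matrix_vector_mult_diff_distrib)

lemma JG2: "block_J Jm Jp (G2 y z) = G2 (block_J Jm Jp y) (Jp *v z)"
  by (rule ext) (auto simp: block_J_def G2_def shf_def matrix_vector_right_distrib vector_scalar_commute)

lemma inv_mat: "M ** M = mat 1 \<Longrightarrow> M *v (M *v v) = v"
  by (simp add: matrix_vector_mul_assoc)

lemma JJ: "Jm ** Jm = mat 1 \<Longrightarrow> Jp ** Jp = mat 1 \<Longrightarrow> block_J Jm Jp (block_J Jm Jp f) = f"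
  by (rule ext) (simp add: block_J_def inv_mat)

definition lagr :: "complex^'n^'n \<Rightarrow> complex^'n^'n \<Rightarrow> ((complex^'n) \<times> (complex^'n)) set \<Rightarrow> bool" where
  "lagr Jm Jp L \<longleftrightarrow> (\<forall>w0 w. (w0, w) \<in> L \<longleftrightarrow> (\<forall>(b,a)\<in>L. ip_N a (Jp *v w) = ip_N b (Jm *v w0)))"

lemma Jsa_of_lagr:
  assumes inv: "Jm ** Jm = mat 1" "Jp ** Jp = mat 1"
    and HJ: "\<forall>f\<in>l2. block_J Jm Jp f \<in> l2"
    and L0: "(0,0) \<in> L" and lg: "lagr Jm Jp L"
  shows "op_comp_right (adjoint_op (Bset L)) (block_J Jm Jp) = op_comp_left (block_J Jm Jp) (Bset L)"
proof (rule set_eqI, rule iffI)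
  let ?J = "block_J Jm Jp"
  fix p assume "p \<in> op_comp_right (adjoint_op (Bset L)) ?J"
  then obtain f h where p: "p = (f, h)" and f: "f \<in> l2" and a: "(?J f, h) \<in> adjoint_op (Bset L)"
    unfolding op_comp_right_def by auto
  from a[unfolded adj_Bset[OF L0]] obtain y z where y: "y \<in> l2" and e: "?J f = G1 y z" "h = G2 y z"
    and c: "\<forall>(b,a)\<in>L. ip_N a z = ip_N b (y 0)" by blast
  have mem: "(?J y 0, Jp *v z) \<in> L"
    unfolding lg[unfolded lagr_def, rule_format] using c
    by (auto simp: block_J_def inv_mat inv)
  have "f = G1 (?J y) (Jp *v z)" using e(1) JJ[OF inv, of f] JG1 by metis
  moreover have "h = ?J (G2 (?J y) (Jp *v z))" using e(2) JJ[OF inv] JG2 by metis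
  moreover have "(G1 (?J y) (Jp *v z), G2 (?J y) (Jp *v z)) \<in> Bset L"
    using Bset_memI[of "?J y" "Jp *v z" L] HJ y mem by blast
  ultimately show "p \<in> op_comp_left ?J (Bset L)"
    unfolding op_comp_left_def p by blast
next
  let ?J = "block_J Jm Jp"
  fix p assume "p \<in> op_comp_left ?J (Bset L)"
  then obtain y z where p: "p = (G1 y z, ?J (G2 y z))" and y: "y \<in> l2" and m: "(y 0, z) \<in> L"
    unfolding op_comp_left_def Bset_def by blast
  have c: "\<forall>(b,a)\<in>L. ip_N a (Jp *v z) = ip_N b (?J y 0)"
    using m[unfolded lg[unfolded lagr_def, rule_format]] by (simp add: block_J_def)
  have "(?J (G1 y z), ?J (G2 y z)) \<in> adjoint_op (Bset L)"
    unfolding adj_Bset[OF L0] JG1 JG2 using HJ y c by blast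
  then show "p \<in> op_comp_right (adjoint_op (Bset L)) ?J"
    unfolding op_comp_right_def p using l2_G1[OF y] by blast
qed

lemma adjoint_anti: "A \<subseteq> B \<Longrightarrow> adjoint_op B \<subseteq> adjoint_op A"
  unfolding adjoint_op_def by blast

lemma lagr_of_Sigma:
  fixes Jm Jp :: "complex^'n::finite^'n"
  assumes inv: "Jm ** Jm = mat 1" "Jp ** Jp = mat 1"
    and HJ: "\<forall>f\<in>l2. block_J Jm Jp f \<in> l2"
    and B: "B \<in> Sigma_J (block_J Jm Jp) op_S"
  shows "\<exists>L. lagr Jm Jp L"
proof -
  let ?J = "block_J Jm Jp"
  have op: "is_operator B" and eq: "op_comp_right (adjoint_op B) ?J = op_comp_left ?J B"
    and SB: "op_S \<subseteq> B"
    using B unfolding Sigma_J_def J_selfadjoint_def densely_defined_def by auto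
  have st1: "\<exists>y z. y \<in> l2 \<and> f = G1 y z \<and> g = G2 y z" if fg: "(f, g) \<in> B" for f g
  proof -
    have "(f, ?J g) \<in> op_comp_left ?J B" unfolding op_comp_left_def using fg by blast
    then have "(?J f, ?J g) \<in> adjoint_op B" unfolding eq[symmetric] op_comp_right_def by blast
    then have "(?J f, ?J g) \<in> adjoint_op (Bset {(0,0)})"
      using adjoint_anti[OF SB] unfolding op_S_eq by blast
    then obtain y z where y: "y \<in> l2" and e: "?J f = G1 y z" "?J g = G2 y z"
      unfolding adj_Bset[of "{(0,0)}", simplified] by blast
    have "f = G1 (?J y) (Jp *v z)" using e(1) JJ[OF inv, of f] JG1 by metis
    moreover have "g = G2 (?J y) (Jp *v z)" using e(2) JJ[OF inv, of g] JG2 by metis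
    ultimately show ?thesis using HJ y by blast
  qed
  define L where "L = {(y 0, z) | y z. y \<in> l2 \<and> (G1 y z, G2 y z) \<in> B}"
  have BL: "B = Bset L"
  proof
    show "B \<subseteq> Bset L"
    proof
      fix p assume "p \<in> B"
      then obtain f g where p: "p = (f, g)" and fg: "(f,g) \<in> B" by (cases p) auto
      then obtain y z where "y \<in> l2" "f = G1 y z" "g = G2 y z" using st1 by blast
      then show "p \<in> Bset L" unfolding Bset_def L_def p using fg by blast
    qed
    show "Bset L \<subseteq> B"
    proof
      fix p assume "p \<in> Bset L"
      then obtain y z y' where p: "p = (G1 y z, G2 y z)" and y: "y \<in> l2" and y': "y' \<in> l2"
        and e: "y 0 = y' 0" and m: "(G1 y' z, G2 y' z) \<in> B"
        unfolding Bset_def L_def by auto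
      have d: "(G1 (\<lambda>k. y k - y' k) 0, G2 (\<lambda>k. y k - y' k) 0) \<in> B"
        using SB unfolding op_S_eq by (rule subsetD) (rule Bset_memI, use y y' e in \<open>auto intro: l2_diff\<close>)
      have "(sadd (G1 y' z) (G1 (\<lambda>k. y k - y' k) 0), sadd (G2 y' z) (G2 (\<lambda>k. y k - y' k) 0)) \<in> B"
        using op m d unfolding is_operator_def by blast
      moreover have "sadd (G1 y' z) (G1 (\<lambda>k. y k - y' k) 0) = G1 y z"
        using G1_add[of y' "\<lambda>k. y k - y' k" z 0] by (simp add: sadd_def)
      moreover have "sadd (G2 y' z) (G2 (\<lambda>k. y k - y' k) 0) = G2 y z"
        using G2_add[of y' "\<lambda>k. y k - y' k" z 0] by (simp add: sadd_def)
      ultimately show "p \<in> B" using p by simp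
    qed
  qed
  have L0: "(0, 0) \<in> L"
  proof -
    have "(G1 (\<lambda>k. 0) 0, G2 (\<lambda>k. 0) 0) \<in> B" using op unfolding is_operator_def G_zero by blast
    then show ?thesis unfolding L_def by force
  qed
  have "lagr Jm Jp L"
    unfolding lagr_def
  proof (intro allI)
    fix w0 w :: "complex^'n"
    let ?y = "dlt 0 w0"
    let ?f = "G1 ?y w" and ?g = "G2 ?y w"
    have "(w0, w) \<in> L \<longleftrightarrow> (?f, ?g) \<in> B"
    proof
      assume "(w0, w) \<in> L"
      then show "(?f, ?g) \<in> B" unfolding BL by (intro Bset_memI l2_dlt) (simp add: dlt_def)
    next
      assume "(?f, ?g) \<in> B"
      moreover have "dlt 0 w0 0 = w0" by (simp add: dlt_def)
      ultimately show "(w0, w) \<in> L" unfolding L_def using l2_dlt[of 0 w0] by (metis (mono_tags, lifting) mem_Collect_eq)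
    qed
    also have "\<dots> \<longleftrightarrow> (?f, ?J ?g) \<in> op_comp_left ?J B"
    proof
      assume "(?f, ?g) \<in> B" then show "(?f, ?J ?g) \<in> op_comp_left ?J B"
        unfolding op_comp_left_def by blast
    next
      assume "(?f, ?J ?g) \<in> op_comp_left ?J B"
      then obtain g' where g': "(?f, g') \<in> B" "?J ?g = ?J g'" unfolding op_comp_left_def by blast
      then have "?g = g'" using JJ[OF inv] by metis
      then show "(?f, ?g) \<in> B" using g' by simp
    qed
    also have "\<dots> \<longleftrightarrow> (?J ?f, ?J ?g) \<in> adjoint_op (Bset L)"
    proof -
      have "(?f, ?J ?g) \<in> op_comp_left ?J B \<longleftrightarrow> (?f, ?J ?g) \<in> op_comp_right (adjoint_op B) ?J"
        by (simp add: eq)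
      also have "\<dots> \<longleftrightarrow> (?J ?f, ?J ?g) \<in> adjoint_op B"
        unfolding op_comp_right_def using l2_G1[OF l2_dlt] by auto
      finally show ?thesis unfolding BL .
    qed
    also have "\<dots> \<longleftrightarrow> (\<forall>(b,a)\<in>L. ip_N a (Jp *v w) = ip_N b (Jm *v w0))"
    proof -
      have "(?J ?f, ?J ?g) \<in> adjoint_op (Bset L) \<longleftrightarrow>
        (\<exists>y z. y \<in> l2 \<and> G1 (?J ?y) (Jp *v w) = G1 y z \<and> G2 (?J ?y) (Jp *v w) = G2 y z \<and>
          (\<forall>(b,a)\<in>L. ip_N a z = ip_N b (y 0)))"
        unfolding adj_Bset[OF L0] JG1 JG2 by simp
      also have "\<dots> \<longleftrightarrow> (\<forall>(b,a)\<in>L. ip_N a (Jp *v w) = ip_N b (?J ?y 0))"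
        using HJ l2_dlt G_inj by metis
      also have "?J ?y 0 = Jm *v w0" by (simp add: block_J_def dlt_def)
      finally show ?thesis by simp
    qed
    finally show "(w0, w) \<in> L \<longleftrightarrow> (\<forall>(b,a)\<in>L. ip_N a (Jp *v w) = ip_N b (Jm *v w0))" .
  qed
  then show ?thesis by blast
qed



definition Dx :: "'n::finite seq \<Rightarrow> 'n seq" where
  "Dx x = (\<lambda>k. x (k - 1) - x k)"

definition Qn :: "'n::finite seq \<Rightarrow> real" where
  "Qn h = infsum (\<lambda>k. normsq_N (h k)) UNIV"

lemma l2_Dx: "x \<in> l2 \<Longrightarrow> Dx x \<in> l2"
  unfolding Dx_def using l2_shift[of x "-1"] by (auto intro: l2_diff)

lemma Dx_add: "Dx (\<lambda>k. x k + x' k) = (\<lambda>k. Dx x k + Dx x' k)"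
  by (auto simp: Dx_def)

lemma Qn_nonneg: "Qn h \<ge> 0"
  unfolding Qn_def by (rule infsum_nonneg) (simp add: normsq_N_nonneg)

lemma Qn_add: "a \<in> l2 \<Longrightarrow> b \<in> l2 \<Longrightarrow> Qn (\<lambda>k. a k + b k) \<le> 2 * Qn a + 2 * Qn b"
proof -
  assume a: "a \<in> l2" and b: "b \<in> l2"
  have sa: "(\<lambda>k. 2 * normsq_N (a k)) summable_on UNIV" using a by (simp add: l2_iff summable_on_cmult_right)
  have sb: "(\<lambda>k. 2 * normsq_N (b k)) summable_on UNIV" using b by (simp add: l2_iff summable_on_cmult_right)
  have "Qn (\<lambda>k. a k + b k) \<le> infsum (\<lambda>k. 2 * normsq_N (a k) + 2 * normsq_N (b k)) UNIV"
    unfolding Qn_def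
    apply (rule infsum_mono)
    using l2_add[OF a b] apply (simp add: l2_iff)
     apply (rule summable_on_add[OF sa sb])
    by (rule normsq_N_add)
  also have "\<dots> = 2 * Qn a + 2 * Qn b"
    unfolding Qn_def using a b
    by (simp add: infsum_add[OF sa sb] infsum_cmult_right l2_iff)
  finally show ?thesis .
qed

lemma Qn_fin:
  assumes "finite I" "\<And>k. k \<notin> I \<Longrightarrow> h k = 0"
  shows "Qn h = (\<Sum>k\<in>I. normsq_N (h k))"
proof -
  have "Qn h = infsum (\<lambda>k. normsq_N (h k)) I"
    unfolding Qn_def by (rule infsum_cong_neutral) (use assms in \<open>auto simp: normsq_N_def\<close>)
  then show ?thesis using assms by simp
qed

definition apx :: "'n::finite seq \<Rightarrow> bool" where
  "apx phi \<longleftrightarrow> (\<forall>e>0. \<exists>x. x \<in> l2 \<and> x 0 = 0 \<and> Qn (\<lambda>k. phi k - Dx x k) < e)"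

lemma apx_add:
  assumes "phi \<in> l2" "psi \<in> l2" "apx phi" "apx psi"
  shows "apx (\<lambda>k. phi k + psi k)"
  unfolding apx_def
proof (intro allI impI)
  fix e :: real assume e: "e > 0"
  obtain x where x: "x \<in> l2" "x 0 = 0" "Qn (\<lambda>k. phi k - Dx x k) < e/4"
    using assms(3) e unfolding apx_def by (meson divide_pos_pos zero_less_numeral)
  obtain x' where x': "x' \<in> l2" "x' 0 = 0" "Qn (\<lambda>k. psi k - Dx x' k) < e/4"
    using assms(4) e unfolding apx_def by (meson divide_pos_pos zero_less_numeral)
  have "(\<lambda>k. (phi k + psi k) - Dx (\<lambda>k. x k + x' k) k) = (\<lambda>k. (phi k - Dx x k) + (psi k - Dx x' k))"
    by (auto simp: Dx_add)
  moreover have "Qn (\<lambda>k. (phi k - Dx x k) + (psi k - Dx x' k)) \<le> 2 * Qn (\<lambda>k. phi k - Dx x k) + 2 * Qn (\<lambda>k. psi k - Dx x' k)"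
    by (rule Qn_add) (use assms x x' in \<open>auto intro: l2_diff l2_Dx\<close>)
  ultimately have "Qn (\<lambda>k. (phi k + psi k) - Dx (\<lambda>k. x k + x' k) k) < e" using x x' by simp
  then show "\<exists>x. x \<in> l2 \<and> x 0 = 0 \<and> Qn (\<lambda>k. (phi k + psi k) - Dx x k) < e"
    using x x' l2_add by (intro exI[of _ "\<lambda>k. x k + x' k"]) auto
qed

lemma err_Qn:
  assumes "M > 0" "card I = M" "finite I" "\<And>k. k \<notin> I \<Longrightarrow> h k = 0" "\<And>k. k \<in> I \<Longrightarrow> h k = (1 / of_nat M) *s u"
  shows "Qn h = normsq_N u / real M"
proof -
  have "Qn h = (\<Sum>k\<in>I. normsq_N ((1 / of_nat M) *s u))"
    using Qn_fin[OF assms(3,4)] assms(5) by simp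
  also have "\<dots> = real M * ((1 / real M)\<^sup>2 * normsq_N u)"
    using assms(2) by (simp add: normsq_N_scale norm_divide)
  also have "\<dots> = normsq_N u / real M"
    using assms(1) by (simp add: power2_eq_square field_simps)
  finally show ?thesis .
qed

lemma ramp_pos:
  fixes j :: int and M :: nat and u :: "complex^'n::finite"
  assumes j: "j \<ge> 1" and M: "M > 0"
  defines "x \<equiv> (\<lambda>k. if j \<le> k \<and> k \<le> j + int M then (- (of_int (j + int M - k) / of_nat M)) *s u else 0)"
  shows "x \<in> l2" "x 0 = 0" "Qn (\<lambda>k. dlt j u k - Dx x k) = normsq_N u / real M"
proof -
  show "x \<in> l2" by (rule l2_finite) (auto simp: x_def intro: rev_finite_subset[of "{j..j + int M}"])
  show "x 0 = 0" using j by (simp add: x_def)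
  show "Qn (\<lambda>k. dlt j u k - Dx x k) = normsq_N u / real M"
  proof (rule err_Qn[OF M, of "{j+1..j + int M}"])
    show "card {j+1..j + int M} = M" by simp
    show "finite {j+1..j + int M}" by simp
    fix k
    show "k \<notin> {j+1..j + int M} \<Longrightarrow> dlt j u k - Dx x k = 0"
      using M by (cases "k = j + int M + 1") (auto simp: dlt_def Dx_def x_def vec_eq_iff)
    show "k \<in> {j+1..j + int M} \<Longrightarrow> dlt j u k - Dx x k = (1 / of_nat M) *s u"
      using M by (auto simp: dlt_def Dx_def x_def vec_eq_iff field_simps)
  qed
qed

lemma ramp_neg:
  fixes j :: int and M :: nat and u :: "complex^'n::finite"
  assumes j: "j \<le> 0" and M: "M > 0"
  defines "x \<equiv> (\<lambda>k. if j - 1 - int M \<le> k \<and> k \<le> j - 1 then (of_int (k - (j - 1 - int M)) / of_nat M) *s u else 0)"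
  shows "x \<in> l2" "x 0 = 0" "Qn (\<lambda>k. dlt j u k - Dx x k) = normsq_N u / real M"
proof -
  show "x \<in> l2" by (rule l2_finite) (auto simp: x_def intro: rev_finite_subset[of "{j - 1 - int M..j - 1}"])
  show "x 0 = 0" using j by (simp add: x_def)
  show "Qn (\<lambda>k. dlt j u k - Dx x k) = normsq_N u / real M"
  proof (rule err_Qn[OF M, of "{j - int M..j - 1}"])
    show "card {j - int M..j - 1} = M" by simp
    show "finite {j - int M..j - 1}" by simp
    fix k
    show "k \<notin> {j - int M..j - 1} \<Longrightarrow> dlt j u k - Dx x k = 0"
      using M by (cases "k = j") (auto simp: dlt_def Dx_def x_def vec_eq_iff)
    show "k \<in> {j - int M..j - 1} \<Longrightarrow> dlt j u k - Dx x k = (1 / of_nat M) *s u"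
      using M by (auto simp: dlt_def Dx_def x_def vec_eq_iff field_simps)
  qed
qed



lemma l2_restr: "finite F \<Longrightarrow> (\<lambda>k. if k \<in> F then f k else 0) \<in> l2"
proof -
  assume F: "finite F"
  have "{k. (if k \<in> F then f k else 0) \<noteq> 0} \<subseteq> F" by auto
  then have "finite {k. (if k \<in> F then f k else 0) \<noteq> 0}" using F by (rule finite_subset)
  then show ?thesis by (rule l2_finite)
qed

lemma apx_dlt: "apx (dlt j u)"
  unfolding apx_def
proof (intro allI impI)
  fix e :: real assume e: "e > 0"
  obtain M :: nat where M: "M > normsq_N u / e" using reals_Archimedean2 by blast
  define M' where "M' = Suc M"
  have M'0: "M' > 0" by (simp add: M'_def)
  have "normsq_N u / real M' < e"
  proof -
    have "normsq_N u < e * real M'" using M e by (simp add: M'_def field_simps)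
    then show ?thesis using M'0 by (simp add: field_simps)
  qed
  then show "\<exists>x. x \<in> l2 \<and> x 0 = 0 \<and> Qn (\<lambda>k. dlt j u k - Dx x k) < e"
  proof (cases "j \<ge> 1")
    case True
    then show ?thesis using ramp_pos[OF True M'0, of u] \<open>normsq_N u / real M' < e\<close> by (intro exI conjI) (assumption, assumption, simp)
  next
    case False
    then have "j \<le> 0" by simp
    then show ?thesis using ramp_neg[OF _ M'0, of j u] \<open>normsq_N u / real M' < e\<close> by (intro exI conjI) (assumption, assumption, simp)
  qed
qed

lemma apx_fin: "finite F \<Longrightarrow> apx (\<lambda>k. if k \<in> F then f k else 0)"
proof (induction F rule: finite_induct)
  case empty
  show ?case unfolding apx_def
    by (intro allI impI exI[of _ "\<lambda>k. 0"]) (simp add: Dx_def Qn_def normsq_N_def)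
next
  case (insert j F)
  have e: "(\<lambda>k. if k \<in> insert j F then f k else 0) = (\<lambda>k. dlt j (f j) k + (if k \<in> F then f k else 0))"
    using insert.hyps by (auto simp: dlt_def)
  show ?case unfolding e
    by (rule apx_add[OF l2_dlt l2_restr[OF insert.hyps(1)] apx_dlt insert.IH])
qed

lemma tail_small:
  assumes f: "f \<in> l2" and e: "e > 0"
  shows "\<exists>F. finite F \<and> Qn (\<lambda>k. if k \<in> F then 0 else f k) < e"
proof -
  have s: "(\<lambda>k. normsq_N (f k)) summable_on UNIV" using f by (simp add: l2_iff)
  obtain F where F: "finite F" and d: "dist (sum (\<lambda>k. normsq_N (f k)) F) (infsum (\<lambda>k. normsq_N (f k)) UNIV) \<le> e/2"
    using infsum_finite_approximation[OF s, of "e/2"] e by auto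
  have s1: "(\<lambda>k. if k \<in> F then normsq_N (f k) else 0) summable_on UNIV"
  proof (rule finite_nonzero_values_imp_summable_on)
    have "{x \<in> UNIV. (if x \<in> F then normsq_N (f x) else 0) \<noteq> 0} \<subseteq> F" by auto
    then show "finite {x \<in> UNIV. (if x \<in> F then normsq_N (f x) else 0) \<noteq> 0}" using F by (rule finite_subset)
  qed
  have s2: "(\<lambda>k. if k \<in> F then 0 else normsq_N (f k)) summable_on UNIV"
    by (rule summable_on_comparison_test[OF s]) (auto simp: normsq_N_nonneg)
  have i1: "infsum (\<lambda>k. if k \<in> F then normsq_N (f k) else 0) UNIV = sum (\<lambda>k. normsq_N (f k)) F"
  proof -
    have "infsum (\<lambda>k. if k \<in> F then normsq_N (f k) else 0) UNIV = infsum (\<lambda>k. normsq_N (f k)) F"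
      by (rule infsum_cong_neutral) auto
    then show ?thesis using F by simp
  qed
  have "infsum (\<lambda>k. normsq_N (f k)) UNIV
      = infsum (\<lambda>k. (if k \<in> F then normsq_N (f k) else 0) + (if k \<in> F then 0 else normsq_N (f k))) UNIV"
    by (rule infsum_cong) auto
  also have "\<dots> = sum (\<lambda>k. normsq_N (f k)) F + infsum (\<lambda>k. if k \<in> F then 0 else normsq_N (f k)) UNIV"
    by (simp add: infsum_add[OF s1 s2] i1)
  moreover have "(\<lambda>k. normsq_N (if k \<in> F then 0 else f k)) = (\<lambda>k. if k \<in> F then 0 else normsq_N (f k))"
    by (auto simp: normsq_N_def)
  ultimately have "Qn (\<lambda>k. if k \<in> F then 0 else f k) = infsum (\<lambda>k. normsq_N (f k)) UNIV - sum (\<lambda>k. normsq_N (f k)) F"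
    unfolding Qn_def by simp
  also have "\<dots> \<le> e/2" using d unfolding dist_real_def by linarith
  also have "\<dots> < e" using e by simp
  finally show ?thesis using F by blast
qed

lemma dense_D0:
  assumes f: "f \<in> l2" and e: "e > 0"
  shows "\<exists>x. x \<in> l2 \<and> x 0 = 0 \<and> norm_l2 (\<lambda>k. f k - Dx x k) < e"
proof -
  have e2: "e\<^sup>2 / 4 > 0" using e by simp
  obtain F where F: "finite F" and t: "Qn (\<lambda>k. if k \<in> F then 0 else f k) < e\<^sup>2 / 4"
    using tail_small[OF f e2] by blast
  obtain x where x: "x \<in> l2" "x 0 = 0" "Qn (\<lambda>k. (if k \<in> F then f k else 0) - Dx x k) < e\<^sup>2 / 4"
    using apx_fin[OF F, of f] e2 unfolding apx_def by blast
  have fF: "(\<lambda>k. if k \<in> F then f k else 0) \<in> l2" by (rule l2_restr[OF F])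
  have tl: "(\<lambda>k. if k \<in> F then 0 else f k) \<in> l2"
    using l2_diff[OF f fF] by (simp add: if_distrib cong: if_cong)
  have "(\<lambda>k. f k - Dx x k) = (\<lambda>k. (if k \<in> F then 0 else f k) + ((if k \<in> F then f k else 0) - Dx x k))"
    by auto
  then have "Qn (\<lambda>k. f k - Dx x k) \<le> 2 * Qn (\<lambda>k. if k \<in> F then 0 else f k) + 2 * Qn (\<lambda>k. (if k \<in> F then f k else 0) - Dx x k)"
    using Qn_add[OF tl l2_diff[OF fF l2_Dx[OF x(1)]]] by simp
  also have "\<dots> < e\<^sup>2" using t x(3) by simp
  finally have "Qn (\<lambda>k. f k - Dx x k) < e\<^sup>2" .
  then have "norm_l2 (\<lambda>k. f k - Dx x k) < e"
  proof -
    have "sqrt (Qn (\<lambda>k. f k - Dx x k)) < sqrt (e\<^sup>2)" by (rule real_sqrt_less_mono) fact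
    then show ?thesis unfolding norm_l2_def Qn_def[symmetric] using e by simp
  qed
  then show ?thesis using x by blast
qed



lemma lagr_sub:
  assumes lg: "lagr Jm Jp L"
  shows "(0,0) \<in> L"
    and "(a, b) \<in> L \<Longrightarrow> (c, d) \<in> L \<Longrightarrow> (a + c, b + d) \<in> L"
    and "(a, b) \<in> L \<Longrightarrow> (s *s a, s *s b) \<in> L"
proof -
  note L = lg[unfolded lagr_def, rule_format]
  show "(0,0) \<in> L" unfolding L by auto
  show "(a + c, b + d) \<in> L" if h: "(a, b) \<in> L" "(c, d) \<in> L"
    unfolding L
  proof (clarify)
    fix p q assume "(p, q) \<in> L"
    moreover have "\<forall>(p',q')\<in>L. ip_N q' (Jp *v b) = ip_N p' (Jm *v a)" using h(1) unfolding L .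
    moreover have "\<forall>(p',q')\<in>L. ip_N q' (Jp *v d) = ip_N p' (Jm *v c)" using h(2) unfolding L .
    ultimately have "ip_N q (Jp *v b) = ip_N p (Jm *v a)" "ip_N q (Jp *v d) = ip_N p (Jm *v c)"
      by blast+
    then show "ip_N q (Jp *v (b + d)) = ip_N p (Jm *v (a + c))"
      by (simp add: matrix_vector_right_distrib ip_N_add_right)
  qed
  show "(s *s a, s *s b) \<in> L" if h: "(a, b) \<in> L"
    unfolding L
  proof (clarify)
    fix p q assume "(p, q) \<in> L"
    moreover have "\<forall>(p',q')\<in>L. ip_N q' (Jp *v b) = ip_N p' (Jm *v a)" using h(1) unfolding L .
    ultimately have "ip_N q (Jp *v b) = ip_N p (Jm *v a)" by blast
    then show "ip_N q (Jp *v (s *s b)) = ip_N p (Jm *v (s *s a))"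
      by (simp add: vector_scalar_commute ip_N_scale_right)
  qed
qed

lemma is_operator_Bset:
  assumes L0: "(0,0) \<in> L"
    and Ladd: "\<And>a b c d. (a, b) \<in> L \<Longrightarrow> (c, d) \<in> L \<Longrightarrow> (a + c, b + d) \<in> L"
    and Lsc: "\<And>a b s. (a, b) \<in> L \<Longrightarrow> (s *s a, s *s b) \<in> L"
  shows "is_operator (Bset L)"
  unfolding is_operator_def
proof (intro conjI allI impI)
  show "Bset L \<subseteq> l2 \<times> l2" unfolding Bset_def using l2_G1 l2_G2 by blast
  have "(G1 (\<lambda>k. 0) 0, G2 (\<lambda>k. 0) 0) \<in> Bset L" by (rule Bset_memI) (simp_all add: L0)
  then show "(\<lambda>k. 0, \<lambda>k. 0) \<in> Bset L" by (simp only: G_zero)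
next
  fix f g h assume a: "(f, g) \<in> Bset L" "(f, h) \<in> Bset L"
  then obtain y z y' z' where y: "y \<in> l2" "f = G1 y z" "g = G2 y z" and y': "y' \<in> l2" "f = G1 y' z'" "h = G2 y' z'"
    unfolding Bset_def by blast
  have "G1 (\<lambda>k. y k - y' k) (z - z') = (\<lambda>k. 0)" using y y' by (simp add: G1_diff)
  from G1_zero[OF this l2_diff[OF y(1) y'(1)]]
  have e: "(\<lambda>k. y k - y' k) = (\<lambda>k. 0)" "z - z' = 0" by simp_all
  have "y k = y' k" for k using fun_cong[OF e(1), of k] by simp
  then have "y = y'" "z = z'" using e(2) by auto
  then show "g = h" using y y' by simp
next
  fix f g f' g' assume a: "(f, g) \<in> Bset L" "(f', g') \<in> Bset L"
  then obtain y z y' z' where y: "y \<in> l2" "(y 0, z) \<in> L" "f = G1 y z" "g = G2 y z"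
    and y': "y' \<in> l2" "(y' 0, z') \<in> L" "f' = G1 y' z'" "g' = G2 y' z'"
    unfolding Bset_def by blast
  have "(G1 (\<lambda>k. y k + y' k) (z + z'), G2 (\<lambda>k. y k + y' k) (z + z')) \<in> Bset L"
    by (rule Bset_memI) (use y y' Ladd l2_add in auto)
  then show "(sadd f f', sadd g g') \<in> Bset L" using y y' by (simp add: G1_add G2_add sadd_def)
next
  fix f g c assume a: "(f, g) \<in> Bset L"
  then obtain y z where y: "y \<in> l2" "(y 0, z) \<in> L" "f = G1 y z" "g = G2 y z"
    unfolding Bset_def by blast
  have "(G1 (\<lambda>k. c *s y k) (c *s z), G2 (\<lambda>k. c *s y k) (c *s z)) \<in> Bset L"
    by (rule Bset_memI) (use y Lsc l2_scale in auto)
  then show "(sscale c f, sscale c g) \<in> Bset L" using y by (simp add: G1_scale G2_scale sscale_def)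
qed

lemma dense_Bset:
  assumes L0: "(0,0) \<in> L"
  shows "dense_in_l2 (dom_op (Bset L))"
  unfolding dense_in_l2_def
proof (intro conjI ballI allI impI)
  show "dom_op (Bset L) \<subseteq> l2" unfolding dom_op_def Bset_def using l2_G1 by auto
next
  fix f :: "'a seq" and e :: real assume f: "f \<in> l2" and e: "e > 0"
  obtain x where x: "x \<in> l2" "x 0 = 0" "norm_l2 (\<lambda>k. f k - Dx x k) < e"
    using dense_D0[OF f e] by blast
  have "Dx x = G1 x 0" unfolding Dx_def G1_def using shf_x0[of x, OF x(2)] by simp
  moreover have "(G1 x 0, G2 x 0) \<in> Bset L" by (rule Bset_memI) (use x L0 in auto)
  ultimately have "Dx x \<in> dom_op (Bset L)" unfolding dom_op_def by force
  then show "\<exists>g\<in>dom_op (Bset L). norm_l2 (\<lambda>k. f k - g k) < e" using x(3) by blast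
qed

lemma Sigma_of_lagr:
  fixes Jm Jp :: "complex^'n::finite^'n"
  assumes inv: "Jm ** Jm = mat 1" "Jp ** Jp = mat 1"
    and HJ: "\<forall>f\<in>l2. block_J Jm Jp f \<in> l2"
    and lg: "lagr Jm Jp L"
  shows "Bset L \<in> Sigma_J (block_J Jm Jp) op_S"
proof -
  note sub = lagr_sub[OF lg]
  have "op_S \<subseteq> Bset L"
  proof
    fix p :: "'n seq \<times> 'n seq" assume "p \<in> op_S"
    then obtain y z where "p = (G1 y z, G2 y z)" "y \<in> l2" "(y 0, z) \<in> {(0,0)}"
      unfolding op_S_eq Bset_def by blast
    then show "p \<in> Bset L" using Bset_memI[of y z L] sub(1) by simp
  qed
  moreover have "densely_defined (Bset L)"
    unfolding densely_defined_def using is_operator_Bset[OF sub] dense_Bset[OF sub(1)] by blast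
  moreover have "op_comp_right (adjoint_op (Bset L)) (block_J Jm Jp) = op_comp_left (block_J Jm Jp) (Bset L)"
    by (rule Jsa_of_lagr[OF inv HJ sub(1) lg])
  ultimately show ?thesis unfolding Sigma_J_def J_selfadjoint_def by blast
qed



lemma ip_expand: "ip_N (a *s e + u) (b *s e + v) = a * cnj b * ip_N e e + a * ip_N e v + cnj b * ip_N u e + ip_N u v"
  by (simp add: ip_N_add_left ip_N_add_right ip_N_scale_left ip_N_scale_right algebra_simps)

lemma unit_in:
  fixes P :: "(complex^'n::finite) set"
  assumes "vec.subspace P" "vec.dim P > 0"
  shows "\<exists>e\<in>P. ip_N e e = 1"
proof -
  have "\<not> P \<subseteq> {0}"
  proof
    assume "P \<subseteq> {0}" then have "vec.dim P = 0" by simp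
    with assms(2) show False by simp
  qed
  then obtain e where e: "e \<in> P" "e \<noteq> 0" by auto
  then have n: "normsq_N e > 0" using normsq_N_nonneg[of e] normsq_N_zero_iff[of e] by linarith
  define e' where "e' = complex_of_real (1 / sqrt (normsq_N e)) *s e"
  have "e' \<in> P" unfolding e'_def using assms(1) e(1) by (rule vec.subspace_scale)
  moreover have "ip_N e' e' = 1"
  proof -
    let ?n = "normsq_N e"
    have "ip_N e' e' = complex_of_real (1 / sqrt ?n) * complex_of_real (1 / sqrt ?n) * complex_of_real ?n"
      unfolding e'_def ip_N_scale_left ip_N_scale_right by (simp add: ip_N_self)
    also have "\<dots> = complex_of_real ((1 / sqrt ?n) * (1 / sqrt ?n) * ?n)" by (simp only: of_real_mult)
    also have "(1 / sqrt ?n) * (1 / sqrt ?n) * ?n = 1"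
    proof -
      have "sqrt ?n * sqrt ?n = ?n" using n by simp
      then show ?thesis using n by (simp add: field_simps)
    qed
    finally show ?thesis by simp
  qed
  ultimately show ?thesis by blast
qed

lemma sub_orth:
  fixes P :: "(complex^'n::finite) set"
  assumes P: "vec.subspace P"
  shows "vec.subspace {x\<in>P. ip_N x e = 0}"
proof (rule vec.subspaceI)
  show "0 \<in> {x\<in>P. ip_N x e = 0}" using vec.subspace_0[OF P] by simp
  show "x + y \<in> {x\<in>P. ip_N x e = 0}" if "x \<in> {x\<in>P. ip_N x e = 0}" "y \<in> {x\<in>P. ip_N x e = 0}" for x y
    using that vec.subspace_add[OF P, of x y] by (simp add: ip_N_add_left)
  show "c *s x \<in> {x\<in>P. ip_N x e = 0}" if "x \<in> {x\<in>P. ip_N x e = 0}" for c x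
    using that vec.subspace_scale[OF P, of x c] by (simp add: ip_N_scale_left)
qed

lemma hyper_dim:
  fixes P :: "(complex^'n::finite) set"
  assumes P: "vec.subspace P" and e: "e \<in> P" "ip_N e e = 1"
  shows "vec.dim P = vec.dim {x\<in>P. ip_N x e = 0} + 1"
proof -
  let ?P' = "{x\<in>P. ip_N x e = 0}"
  have sub: "vec.subspace ?P'"
  proof (rule vec.subspaceI)
    show "0 \<in> ?P'" using vec.subspace_0[OF P] by simp
    show "x + y \<in> ?P'" if "x \<in> ?P'" "y \<in> ?P'" for x y
      using that vec.subspace_add[OF P, of x y] by (simp add: ip_N_add_left)
    show "c *s x \<in> ?P'" if "x \<in> ?P'" for c x
      using that vec.subspace_scale[OF P, of x c] by (simp add: ip_N_scale_left)
  qed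
  have spP: "vec.span ?P' = ?P'" by (rule vec.span_eq_iff[THEN iffD2, OF sub])
  have ne: "e \<notin> vec.span ?P'"
  proof
    assume "e \<in> vec.span ?P'"
    then have "ip_N e e = 0" unfolding spP by simp
    then show False using e(2) by simp
  qed
  have sp: "vec.span (insert e ?P') = P"
  proof
    have "insert e ?P' \<subseteq> P" using e(1) by auto
    then show "vec.span (insert e ?P') \<subseteq> P" using P by (rule vec.span_minimal)
    show "P \<subseteq> vec.span (insert e ?P')"
    proof
      fix x assume x: "x \<in> P"
      have "x - ip_N x e *s e \<in> P" using x e(1) P by (intro vec.subspace_diff vec.subspace_scale)
      moreover have "ip_N (x - ip_N x e *s e) e = 0" using e(2) by (simp add: ip_N_diff_left ip_N_scale_left)
      ultimately have "x - ip_N x e *s e \<in> ?P'" by simp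
      then have "x - ip_N x e *s e \<in> vec.span (insert e ?P')" by (simp add: vec.span_base)
      moreover have "ip_N x e *s e \<in> vec.span (insert e ?P')" by (simp add: vec.span_base vec.span_scale)
      ultimately have "(x - ip_N x e *s e) + ip_N x e *s e \<in> vec.span (insert e ?P')" by (rule vec.span_add)
      then show "x \<in> vec.span (insert e ?P')" by simp
    qed
  qed
  have "vec.dim P = vec.dim (vec.span (insert e ?P'))" using sp by simp
  also have "\<dots> = vec.dim (insert e ?P')" by (rule vec.dim_span)
  also have "\<dots> = vec.dim ?P' + 1" using ne vec.dim_insert[of e ?P'] by simp
  finally show ?thesis .
qed

lemma iso_exists:
  fixes P Q :: "(complex^'n::finite) set"
  shows "vec.subspace P \<Longrightarrow> vec.subspace Q \<Longrightarrow> vec.dim P = d \<Longrightarrow> vec.dim Q = d \<Longrightarrow>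
    \<exists>T. T ` P = Q \<and> (\<forall>x\<in>P. \<forall>y\<in>P. ip_N (T x) (T y) = ip_N x y)"
proof (induction d arbitrary: P Q)
  case 0
  then have "P = {0}" "Q = {0}" using vec.dim_eq_0 vec.subspace_0 by blast+
  then show ?case by (intro exI[of _ "\<lambda>x. 0"]) auto
next
  case (Suc d)
  obtain e where e: "e \<in> P" "ip_N e e = 1" using unit_in[OF Suc.prems(1)] Suc.prems(3) by auto
  obtain f where f: "f \<in> Q" "ip_N f f = 1" using unit_in[OF Suc.prems(2)] Suc.prems(4) by auto
  let ?P' = "{x\<in>P. ip_N x e = 0}" and ?Q' = "{x\<in>Q. ip_N x f = 0}"
  have subP: "vec.subspace ?P'" by (rule sub_orth[OF Suc.prems(1)])
  have subQ: "vec.subspace ?Q'" by (rule sub_orth[OF Suc.prems(2)])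
  have dP: "vec.dim ?P' = d" using hyper_dim[OF Suc.prems(1) e] Suc.prems(3) by simp
  have dQ: "vec.dim ?Q' = d" using hyper_dim[OF Suc.prems(2) f] Suc.prems(4) by simp
  obtain T' where T'1: "T' ` ?P' = ?Q'" and T'2: "\<forall>x\<in>?P'. \<forall>y\<in>?P'. ip_N (T' x) (T' y) = ip_N x y"
    using Suc.IH[OF subP subQ dP dQ] by blast
  define T where "T x = ip_N x e *s f + T' (x - ip_N x e *s e)" for x
  have pr: "x - ip_N x e *s e \<in> ?P'" if "x \<in> P" for x
  proof -
    have "x - ip_N x e *s e \<in> P" using that e(1) Suc.prems(1) by (intro vec.subspace_diff vec.subspace_scale)
    moreover have "ip_N (x - ip_N x e *s e) e = 0" using e(2) by (simp add: ip_N_diff_left ip_N_scale_left)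
    ultimately show ?thesis by simp
  qed
  have "T ` P = Q"
  proof
    show "T ` P \<subseteq> Q"
    proof clarify
      fix x assume x: "x \<in> P"
      have "T' (x - ip_N x e *s e) \<in> Q" using T'1 pr[OF x] by blast
      then show "T x \<in> Q" unfolding T_def using f Suc.prems(2) by (intro vec.subspace_add vec.subspace_scale) auto
    qed
    show "Q \<subseteq> T ` P"
    proof
      fix q assume q: "q \<in> Q"
      have "q - ip_N q f *s f \<in> Q" using q f(1) Suc.prems(2) by (intro vec.subspace_diff vec.subspace_scale)
      moreover have "ip_N (q - ip_N q f *s f) f = 0" using f(2) by (simp add: ip_N_diff_left ip_N_scale_left)
      ultimately have "q - ip_N q f *s f \<in> ?Q'" by simp
      then have "q - ip_N q f *s f \<in> T' ` ?P'" using T'1 by simp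
      then obtain p where p: "p \<in> ?P'" "T' p = q - ip_N q f *s f" by (rule imageE) simp
      define x where "x = ip_N q f *s e + p"
      have xP: "x \<in> P" unfolding x_def using p(1) e Suc.prems(1) by (intro vec.subspace_add vec.subspace_scale) auto
      have "ip_N x e = ip_N q f" unfolding x_def using p(1) e by (simp add: ip_N_add_left ip_N_scale_left)
      then have "T x = q" unfolding T_def using p by (simp add: x_def)
      then show "q \<in> T ` P" using xP by blast
    qed
  qed
  moreover have "\<forall>x\<in>P. \<forall>y\<in>P. ip_N (T x) (T y) = ip_N x y"
  proof (intro ballI)
    fix x y assume x: "x \<in> P" and y: "y \<in> P"
    let ?x' = "x - ip_N x e *s e" and ?y' = "y - ip_N y e *s e"
    have ox: "ip_N (T' ?x') f = 0" "ip_N f (T' ?y') = 0"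
      using T'1 pr[OF x] pr[OF y] by (auto simp: ip_N_sym[of f])
    have ox2: "ip_N ?x' e = 0" "ip_N e ?y' = 0" using pr[OF x] pr[OF y] by (auto simp: ip_N_sym[of e])
    have "ip_N (T x) (T y) = ip_N x e * cnj (ip_N y e) * ip_N f f + ip_N x e * ip_N f (T' ?y')
        + cnj (ip_N y e) * ip_N (T' ?x') f + ip_N (T' ?x') (T' ?y')"
      unfolding T_def by (simp add: ip_N_add_left ip_N_add_right ip_N_scale_left ip_N_scale_right algebra_simps)
    also have "\<dots> = ip_N x e * cnj (ip_N y e) + ip_N ?x' ?y'"
      using ox f T'2 pr[OF x] pr[OF y] by simp
    also have "\<dots> = ip_N x y"
    proof -
      have "ip_N x y = ip_N (ip_N x e *s e + ?x') (ip_N y e *s e + ?y')" by simp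
      also have "\<dots> = ip_N x e * cnj (ip_N y e) * ip_N e e + ip_N x e * ip_N e ?y' + cnj (ip_N y e) * ip_N ?x' e + ip_N ?x' ?y'"
        by (rule ip_expand)
      finally show ?thesis using ox2 e by simp
    qed
    finally show "ip_N (T x) (T y) = ip_N x y" .
  qed
  ultimately show ?case by blast
qed



definition Pos :: "complex^'n^'n \<Rightarrow> (complex^'n::finite) set" where
  "Pos J = {v. J *v v = v}"
definition Neg :: "complex^'n^'n \<Rightarrow> (complex^'n::finite) set" where
  "Neg J = {v. J *v v = - v}"

lemma sub_Pos: "vec.subspace (Pos J)"
  unfolding Pos_def by (rule vec.subspaceI) (auto simp: matrix_vector_right_distrib vector_scalar_commute)
lemma sub_Neg: "vec.subspace (Neg J)"
  unfolding Neg_def by (rule vec.subspaceI) (auto simp: matrix_vector_right_distrib vector_scalar_commute)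

lemma p_Pos: "J ** J = mat 1 \<Longrightarrow> (1/2) *s (x + J *v x) \<in> Pos J"
  unfolding Pos_def by (simp add: matrix_vector_right_distrib vector_scalar_commute inv_mat add.commute)
lemma m_Neg: "J ** J = mat 1 \<Longrightarrow> (1/2) *s (x - J *v x) \<in> Neg J"
  unfolding Neg_def by (simp add: matrix_vector_mult_diff_distrib vector_scalar_commute inv_mat vec_eq_iff)

lemma pm_sum: fixes J :: "complex^'n::finite^'n" shows "x = (1/2) *s (x + J *v x) + (1/2) *s (x - J *v x)"
  by (simp add: vec_eq_iff field_simps)
lemma pm_diff: fixes J :: "complex^'n::finite^'n" shows "J *v x = (1/2) *s (x + J *v x) - (1/2) *s (x - J *v x)"
  by (simp add: vec_eq_iff field_simps)

lemma orth_PN: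
  assumes "cadj J = J" "u \<in> Pos J" "w \<in> Neg J"
  shows "ip_N u w = 0"
proof -
  have "ip_N u w = ip_N (J *v u) w" using assms(2) by (simp add: Pos_def)
  also have "\<dots> = ip_N u (J *v w)" by (rule ip_N_herm[OF assms(1)])
  also have "\<dots> = - ip_N u w" using assms(3) by (simp add: Neg_def ip_N_neg_right)
  finally show ?thesis by simp
qed

lemma range_Neg:
  assumes "J ** J = mat 1"
  shows "range (\<lambda>v. (mat 1 - J) *v v) = Neg J"
proof
  show "range (\<lambda>v. (mat 1 - J) *v v) \<subseteq> Neg J"
    using assms by (auto simp: Neg_def matrix_vector_mult_diff_rdistrib matrix_vector_mult_diff_distrib inv_mat)
  show "Neg J \<subseteq> range (\<lambda>v. (mat 1 - J) *v v)"
  proof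
    fix v assume "v \<in> Neg J"
    then have "(mat 1 - J) *v ((1/2) *s v) = v"
      by (simp add: Neg_def matrix_vector_mult_diff_rdistrib vector_scalar_commute vec_eq_iff)
    then show "v \<in> range (\<lambda>v. (mat 1 - J) *v v)" by (metis rangeI)
  qed
qed

lemma dim_PN:
  fixes J :: "complex^'n::finite^'n"
  assumes "J ** J = mat 1"
  shows "vec.dim (Pos J) + vec.dim (Neg J) = CARD('n)"
proof -
  have i: "Pos J \<inter> Neg J = {0}"
    using vec.subspace_0[OF sub_Pos] vec.subspace_0[OF sub_Neg]
    by (auto simp: Pos_def Neg_def vec_eq_iff)
  have s: "{x + y |x y. x \<in> Pos J \<and> y \<in> Neg J} = UNIV"
  proof -
    have "x \<in> {x + y |x y. x \<in> Pos J \<and> y \<in> Neg J}" for x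
      using pm_sum[of x J] p_Pos[OF assms, of x] m_Neg[OF assms, of x] by blast
    then show ?thesis by blast
  qed
  have "vec.dim {x + y |x y. x \<in> Pos J \<and> y \<in> Neg J} + vec.dim (Pos J \<inter> Neg J) = vec.dim (Pos J) + vec.dim (Neg J)"
    by (rule vec.dim_sums_Int[OF sub_Pos sub_Neg])
  then show ?thesis unfolding s i by (simp add: card_cart_basis)
qed



lemma lagr_exists:
  fixes Jm Jp :: "complex^'n::finite^'n"
  assumes hm: "cadj Jm = Jm" "Jm ** Jm = mat 1" and hp: "cadj Jp = Jp" "Jp ** Jp = mat 1"
    and d: "vec.dim (Neg Jp) = vec.dim (Neg Jm)"
  shows "\<exists>L. lagr Jm Jp L"
proof -
  have dP: "vec.dim (Pos Jp) = vec.dim (Pos Jm)" using dim_PN[OF hp(2)] dim_PN[OF hm(2)] d by simp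
  obtain Tp where Tp1: "Tp ` Pos Jp = Pos Jm" and Tp2: "\<forall>x\<in>Pos Jp. \<forall>y\<in>Pos Jp. ip_N (Tp x) (Tp y) = ip_N x y"
    using iso_exists[OF sub_Pos sub_Pos dP refl] by blast
  obtain Tm where Tm1: "Tm ` Neg Jp = Neg Jm" and Tm2: "\<forall>x\<in>Neg Jp. \<forall>y\<in>Neg Jp. ip_N (Tm x) (Tm y) = ip_N x y"
    using iso_exists[OF sub_Neg sub_Neg d refl] by blast
  define p where "p x = (1/2) *s (x + Jp *v x)" for x
  define m where "m x = (1/2) *s (x - Jp *v x)" for x
  have pP: "p x \<in> Pos Jp" for x unfolding p_def by (rule p_Pos[OF hp(2)])
  have mN: "m x \<in> Neg Jp" for x unfolding m_def by (rule m_Neg[OF hp(2)])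
  define U where "U x = Tp (p x) + Tm (m x)" for x
  have TpP: "Tp (p x) \<in> Pos Jm" for x using Tp1 pP by blast
  have TmN: "Tm (m x) \<in> Neg Jm" for x using Tm1 mN by blast
  have I1: "ip_N (U x) (Jm *v U y) = ip_N x (Jp *v y)" for x y
  proof -
    have JU: "Jm *v U y = Tp (p y) - Tm (m y)"
      using TpP[of y] TmN[of y] by (simp add: U_def Pos_def Neg_def matrix_vector_right_distrib)
    have "ip_N (U x) (Jm *v U y) = ip_N (Tp (p x)) (Tp (p y)) - ip_N (Tp (p x)) (Tm (m y))
        + ip_N (Tm (m x)) (Tp (p y)) - ip_N (Tm (m x)) (Tm (m y))"
      unfolding JU by (simp add: U_def ip_N_add_left ip_N_diff_right algebra_simps)
    also have "\<dots> = ip_N (p x) (p y) - ip_N (m x) (m y)"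
    proof -
      have o2: "ip_N (Tm (m x)) (Tp (p y)) = 0"
        using orth_PN[OF hm(1) TpP[of y] TmN[of x]] by (subst ip_N_sym) simp
      show ?thesis using Tp2 Tm2 pP mN orth_PN[OF hm(1) TpP TmN] o2 by simp
    qed
    also have "\<dots> = ip_N (p x + m x) (p y - m y)"
    proof -
      have o2: "ip_N (m x) (p y) = 0"
        using orth_PN[OF hp(1) pP[of y] mN[of x]] by (subst ip_N_sym) simp
      show ?thesis using orth_PN[OF hp(1) pP[of x] mN[of y]] o2
        by (simp add: ip_N_add_left ip_N_diff_right)
    qed
    also have "\<dots> = ip_N x (Jp *v y)"
      unfolding p_def m_def using pm_sum[of x Jp] pm_diff[of Jp y] by simp
    finally show ?thesis .
  qed
  have surj: "\<exists>a. U a = v" for v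
  proof -
    obtain a1 where a1: "a1 \<in> Pos Jp" "Tp a1 = (1/2) *s (v + Jm *v v)" using Tp1 p_Pos[OF hm(2), of v] by force
    obtain a2 where a2: "a2 \<in> Neg Jp" "Tm a2 = (1/2) *s (v - Jm *v v)" using Tm1 m_Neg[OF hm(2), of v] by force
    have "p (a1 + a2) = a1" "m (a1 + a2) = a2"
      using a1(1) a2(1) by (simp_all add: p_def m_def Pos_def Neg_def matrix_vector_right_distrib vec_eq_iff field_simps)
    then have "U (a1 + a2) = v" unfolding U_def using a1(2) a2(2) pm_sum[of v Jm] by simp
    then show ?thesis by blast
  qed
  define L where "L = {(U a, a) | a. True}"
  have "lagr Jm Jp L"
    unfolding lagr_def
  proof (intro allI)
    fix w0 w :: "complex^'n"
    have "(w0, w) \<in> L \<longleftrightarrow> w0 = U w" unfolding L_def by auto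
    also have "\<dots> \<longleftrightarrow> (\<forall>a. ip_N a (Jp *v w) = ip_N (U a) (Jm *v w0))"
    proof
      assume "w0 = U w" then show "\<forall>a. ip_N a (Jp *v w) = ip_N (U a) (Jm *v w0)" using I1 by simp
    next
      assume h: "\<forall>a. ip_N a (Jp *v w) = ip_N (U a) (Jm *v w0)"
      define dd where "dd = w0 - U w"
      have z: "ip_N (U a) (Jm *v dd) = 0" for a
        using h I1[of a w] by (simp add: dd_def matrix_vector_mult_diff_distrib ip_N_diff_right)
      obtain a where "U a = Jm *v dd" using surj by blast
      then have "ip_N (Jm *v dd) (Jm *v dd) = 0" using z by metis
      then have "Jm *v dd = 0" by (simp add: ip_N_self_zero)
      then have "dd = 0" using inv_mat[OF hm(2), of dd] by simp
      then show "w0 = U w" by (simp add: dd_def)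
    qed
    also have "\<dots> \<longleftrightarrow> (\<forall>(b,a)\<in>L. ip_N a (Jp *v w) = ip_N b (Jm *v w0))"
      unfolding L_def by auto
    finally show "(w0, w) \<in> L \<longleftrightarrow> (\<forall>(b,a)\<in>L. ip_N a (Jp *v w) = ip_N b (Jm *v w0))" .
  qed
  then show ?thesis by blast
qed



interpretation PP: finite_dimensional_vector_space_prod
  "(*s) :: complex \<Rightarrow> complex^'n::finite \<Rightarrow> _" "(*s) :: complex \<Rightarrow> complex^'n::finite \<Rightarrow> _" cart_basis cart_basis
  by unfold_locales

lemma card_BP[simp]: "card (PP.Basis_pair :: ((complex^'n::finite) \<times> (complex^'n)) set) = 2 * CARD('n)"
  by (simp add: PP.dimension_pair[unfolded PP.p.dimension_def vec.dimension_def] card_cart_basis)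

lemma PP_dimUNIV: "PP.p.dim (UNIV :: ((complex^'n::finite) \<times> (complex^'n)) set) = 2 * CARD('n)"
  by (simp add: PP.dimension_pair[unfolded PP.p.dimension_def vec.dimension_def] card_cart_basis)


definition ipP :: "((complex^'n::finite) \<times> (complex^'n)) \<Rightarrow> ((complex^'n) \<times> (complex^'n)) \<Rightarrow> complex" where
  "ipP v w = ip_N (fst v) (fst w) + ip_N (snd v) (snd w)"

lemma ipP_add: "ipP (v + w) m = ipP v m + ipP w m"
  by (simp add: ipP_def ip_N_add_left)
lemma ipP_scale: "ipP (PP.scale c v) m = c * ipP v m"
  by (cases v) (simp add: ipP_def PP.scale_prod ip_N_scale_left algebra_simps)
lemma ipP_add_right: "ipP m (v + w) = ipP m v + ipP m w"
  by (simp add: ipP_def ip_N_add_right)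
lemma ipP_scale_right: "ipP m (PP.scale c v) = cnj c * ipP m v"
  by (cases v) (simp add: ipP_def PP.scale_prod ip_N_scale_right algebra_simps)
lemma ipP_zero: "ipP 0 m = 0" "ipP m 0 = 0"
  by (simp_all add: ipP_def)
lemma ipP_self_zero: "ipP v v = 0 \<Longrightarrow> v = 0"
proof -
  assume h: "ipP v v = 0"
  have "normsq_N (fst v) + normsq_N (snd v) = 0"
    using h by (simp add: ipP_def ip_N_self flip: of_real_add)
  then have "normsq_N (fst v) = 0" "normsq_N (snd v) = 0"
    using normsq_N_nonneg[of "fst v"] normsq_N_nonneg[of "snd v"] by linarith+
  then show "v = 0" by (simp add: normsq_N_zero_iff prod_eq_iff)
qed

lemma sub_H: "PP.p.subspace {v. ipP v m = 0}"
  unfolding PP.p.subspace_def by (auto simp: ipP_add ipP_scale ipP_zero)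

lemma hyperP: "2 * CARD('n) \<le> PP.p.dim {v :: (complex^'n::finite) \<times> (complex^'n). ipP v m = 0} + 1"
proof (cases "m = 0")
  case True
  then have "{v :: (complex^'n) \<times> (complex^'n). ipP v m = 0} = UNIV" by (auto simp: ipP_zero)
  then show ?thesis by simp
next
  case False
  let ?H = "{v :: (complex^'n) \<times> (complex^'n). ipP v m = 0}" and ?S = "PP.p.span {m}"
  have mm: "ipP m m \<noteq> 0" using False ipP_self_zero by blast
  have i: "?H \<inter> ?S \<subseteq> {0}"
  proof
    fix v assume v: "v \<in> ?H \<inter> ?S"
    then obtain c where c: "v = PP.scale c m" by (auto simp: PP.p.span_singleton)
    then have "c * ipP m m = 0" using v by (simp add: ipP_scale)
    then have "c = 0" using mm by simp
    then show "v \<in> {0}" using c by simp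
  qed
  have u: "{x + y |x y. x \<in> ?H \<and> y \<in> ?S} = UNIV"
  proof -
    have "v \<in> {x + y |x y. x \<in> ?H \<and> y \<in> ?S}" for v
    proof -
      define c where "c = ipP v m / ipP m m"
      have "v - PP.scale c m \<in> ?H"
      proof -
        have eq: "v - PP.scale c m = v + PP.scale (- c) m" by (simp add: PP.p.scale_minus_left)
        have "ipP (v - PP.scale c m) m = ipP v m + (- c) * ipP m m"
          unfolding eq ipP_add ipP_scale ..
        also have "\<dots> = 0" using mm by (simp add: c_def)
        finally show ?thesis by simp
      qed
      moreover have "PP.scale c m \<in> ?S" by (simp add: PP.p.span_base PP.p.span_scale)
      moreover have "v = (v - PP.scale c m) + PP.scale c m" by simp
      ultimately show ?thesis by blast
    qed
    then show ?thesis by blast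
  qed
  have "PP.p.dim {x + y |x y. x \<in> ?H \<and> y \<in> ?S} + PP.p.dim (?H \<inter> ?S) = PP.p.dim ?H + PP.p.dim ?S"
    by (rule PP.p.dim_sums_Int[OF sub_H PP.p.subspace_span])
  moreover have "PP.p.dim (?H \<inter> ?S) = 0" using i by simp
  moreover have "PP.p.dim ?S \<le> 1" by (simp add: PP.p.dim_span)
  ultimately show ?thesis unfolding u by simp
qed

lemma OC:
  fixes X :: "((complex^'n::finite) \<times> (complex^'n)) set"
  shows "finite X \<Longrightarrow> 2 * CARD('n) \<le> PP.p.dim {v. \<forall>m\<in>X. ipP v m = 0} + card X"
proof (induction X rule: finite_induct)
  case empty
  then show ?case by simp
next
  case (insert x X)
  let ?W = "{v :: (complex^'n) \<times> (complex^'n). \<forall>m\<in>X. ipP v m = 0}" and ?H = "{v :: (complex^'n) \<times> (complex^'n). ipP v x = 0}"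
  have subW: "PP.p.subspace ?W"
    unfolding PP.p.subspace_def by (auto simp: ipP_add ipP_scale ipP_zero)
  have e: "{v. \<forall>m\<in>insert x X. ipP v m = 0} = ?W \<inter> ?H" by auto
  have "PP.p.dim {x + y |x y. x \<in> ?W \<and> y \<in> ?H} + PP.p.dim (?W \<inter> ?H) = PP.p.dim ?W + PP.p.dim ?H"
    by (rule PP.p.dim_sums_Int[OF subW sub_H])
  moreover have "PP.p.dim {x + y |x y. x \<in> ?W \<and> y \<in> ?H} \<le> 2 * CARD('n)"
    using PP.p.dim_subset_UNIV unfolding PP.p.dimension_def by simp
  moreover have "2 * CARD('n) \<le> PP.p.dim ?H + 1" by (rule hyperP)
  ultimately show ?case unfolding e using insert by simp
qed


lemma lagr_dim:
  fixes Jm Jp :: "complex^'n::finite^'n"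
  assumes hm: "cadj Jm = Jm" "Jm ** Jm = mat 1" and hp: "cadj Jp = Jp" "Jp ** Jp = mat 1"
    and lg: "lagr Jm Jp L"
  shows "vec.dim (Neg Jp) = vec.dim (Neg Jm)"
proof -
  define K where "K v = (- (Jm *v fst v), Jp *v snd v)" for v :: "(complex^'n) \<times> (complex^'n)"
  have key: "ipP (w0, w) (K (b, a)) = cnj (ip_N a (Jp *v w) - ip_N b (Jm *v w0))" for w0 w b a
  proof -
    have 1: "ip_N w (Jp *v a) = cnj (ip_N a (Jp *v w))"
      using ip_N_herm[OF hp(1), of w a] ip_N_sym[of "Jp *v w" a] by simp
    have 2: "ip_N w0 (Jm *v b) = cnj (ip_N b (Jm *v w0))"
      using ip_N_herm[OF hm(1), of w0 b] ip_N_sym[of "Jm *v w0" b] by simp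
    show ?thesis unfolding K_def ipP_def by (simp add: ip_N_neg_right 1 2)
  qed
  have F1: "v \<in> L \<longleftrightarrow> (\<forall>l\<in>L. ipP v (K l) = 0)" for v
  proof -
    obtain w0 w where v: "v = (w0, w)" by (cases v)
    have "v \<in> L \<longleftrightarrow> (\<forall>(b,a)\<in>L. ip_N a (Jp *v w) = ip_N b (Jm *v w0))"
      unfolding v using lg unfolding lagr_def by blast
    also have "\<dots> \<longleftrightarrow> (\<forall>l\<in>L. ipP v (K l) = 0)"
      unfolding v by (auto simp: key)
    finally show ?thesis .
  qed
  note sub = lagr_sub[OF lg]
  have subL: "PP.p.subspace L"
    unfolding PP.p.subspace_def
  proof (intro conjI ballI allI)
    show "0 \<in> L" using sub(1) by (simp add: zero_prod_def)
    fix x y assume "x \<in> L" "y \<in> L"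
    moreover have "x + y = (fst x + fst y, snd x + snd y)" by (simp add: prod_eq_iff)
    ultimately show "x + y \<in> L" using sub(2)[of "fst x" "snd x" "fst y" "snd y"] by simp
  next
    fix c x assume "x \<in> L"
    then show "PP.scale c x \<in> L" using sub(3)[of "fst x" "snd x" c] by (simp add: PP.scale_def)
  qed
  have Kadd: "K (x + y) = K x + K y" for x y by (simp add: K_def matrix_vector_right_distrib)
  have Kscale: "K (PP.scale c x) = PP.scale c (K x)" for c x
    by (simp add: K_def PP.scale_def vector_scalar_commute)
  have K0: "K 0 = 0" by (simp add: K_def zero_prod_def)
  define n where "n = CARD('n)"
  obtain B where B: "B \<subseteq> L" "PP.p.independent B" "L \<subseteq> PP.p.span B" "card B = PP.p.dim L"
    using PP.p.basis_exists by blast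
  have fB: "finite B" using B(2) by (rule PP.p.finiteI_independent)
  have inc: "{v. \<forall>m\<in>K ` B. ipP v m = 0} \<subseteq> L"
  proof
    fix v assume v: "v \<in> {v. \<forall>m\<in>K ` B. ipP v m = 0}"
    have subZ: "PP.p.subspace {l. ipP v (K l) = 0}"
      unfolding PP.p.subspace_def
      by (auto simp: Kadd Kscale ipP_add_right ipP_scale_right K0 ipP_zero)
    have "B \<subseteq> {l. ipP v (K l) = 0}" using v by auto
    then have "PP.p.span B \<subseteq> {l. ipP v (K l) = 0}" using subZ by (rule PP.p.span_minimal)
    then have "\<forall>l\<in>L. ipP v (K l) = 0" using B(3) by blast
    then show "v \<in> L" using F1 by blast
  qed
  have "2 * n \<le> PP.p.dim {v. \<forall>m\<in>K ` B. ipP v m = 0} + card (K ` B)"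
    unfolding n_def by (rule OC) (use fB in simp)
  moreover have "card (K ` B) \<le> card B" using fB by (rule card_image_le)
  moreover have "PP.p.dim {v. \<forall>m\<in>K ` B. ipP v m = 0} \<le> PP.p.dim L" using inc by (rule PP.p.dim_subset)
  ultimately have dL: "n \<le> PP.p.dim L" using B(4) by linarith
  have bound: "PP.p.dim L + PP.p.dim E \<le> 2 * n" if subE: "PP.p.subspace E" and iE: "L \<inter> E \<subseteq> {0}" for E
  proof -
    have "PP.p.dim {x + y |x y. x \<in> L \<and> y \<in> E} + PP.p.dim (L \<inter> E) = PP.p.dim L + PP.p.dim E"
      by (rule PP.p.dim_sums_Int[OF subL subE])
    moreover have "PP.p.dim (L \<inter> E) = 0" using iE by simp
    moreover have "PP.p.dim {x + y |x y. x \<in> L \<and> y \<in> E} \<le> 2 * n"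
      using PP.p.dim_subset_UNIV unfolding PP.p.dimension_def n_def by simp
    ultimately show ?thesis by linarith
  qed
  have i1: "L \<inter> (Neg Jm \<times> Pos Jp) \<subseteq> {0}"
  proof
    fix v assume v: "v \<in> L \<inter> (Neg Jm \<times> Pos Jp)"
    then have "K v = v" by (cases v) (simp add: K_def Neg_def Pos_def)
    moreover have "ipP v (K v) = 0" using v F1 by blast
    ultimately show "v \<in> {0}" using ipP_self_zero by simp
  qed
  have i2: "L \<inter> (Pos Jm \<times> Neg Jp) \<subseteq> {0}"
  proof
    fix v assume v: "v \<in> L \<inter> (Pos Jm \<times> Neg Jp)"
    then have "K v = - v" by (cases v) (simp add: K_def Neg_def Pos_def)
    moreover have "ipP v (K v) = 0" using v F1 by blast
    ultimately have "ipP v (- v) = 0" by simp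
    moreover have "ipP v (- v) = - ipP v v" by (simp add: ipP_def ip_N_neg_right)
    ultimately have "ipP v v = 0" by simp
    then show "v \<in> {0}" using ipP_self_zero by simp
  qed
  have d1: "PP.p.dim (Neg Jm \<times> Pos Jp) = vec.dim (Neg Jm) + vec.dim (Pos Jp)"
    by (rule PP.dim_Times[OF sub_Neg sub_Pos])
  have d2: "PP.p.dim (Pos Jm \<times> Neg Jp) = vec.dim (Pos Jm) + vec.dim (Neg Jp)"
    by (rule PP.dim_Times[OF sub_Pos sub_Neg])
  have b1: "PP.p.dim L + PP.p.dim (Neg Jm \<times> Pos Jp) \<le> 2 * n"
    by (rule bound[OF PP.subspace_Times[OF sub_Neg sub_Pos] i1])
  have b2: "PP.p.dim L + PP.p.dim (Pos Jm \<times> Neg Jp) \<le> 2 * n"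
    by (rule bound[OF PP.subspace_Times[OF sub_Pos sub_Neg] i2])
  have s1: "vec.dim (Pos Jp) + vec.dim (Neg Jp) = n" using dim_PN[OF hp(2)] by (simp add: n_def)
  have s2: "vec.dim (Pos Jm) + vec.dim (Neg Jm) = n" using dim_PN[OF hm(2)] by (simp add: n_def)
  show ?thesis using dL d1 d2 b1 b2 s1 s2 by linarith
qed



theorem proposition3p4:
  fixes Jm Jp :: "complex ^ 'n::finite ^ 'n"
  assumes "fund_sym_N Jm" and "fund_sym_N Jp"
    and "fund_sym_l2 (block_J Jm Jp)"
    and "commutes_with (block_J Jm Jp) op_S"
  shows "Sigma_J (block_J Jm Jp) op_S \<noteq> {} \<longleftrightarrow>
         vec.dim (range (\<lambda>v. (mat 1 - Jp) *v v)) = vec.dim (range (\<lambda>v. (mat 1 - Jm) *v v))"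
proof -
  have hm: "cadj Jm = Jm" "Jm ** Jm = mat 1" using assms(1) by (auto simp: fund_sym_N_def)
  have hp: "cadj Jp = Jp" "Jp ** Jp = mat 1" using assms(2) by (auto simp: fund_sym_N_def)
  have HJ: "\<forall>f\<in>l2. block_J Jm Jp f \<in> l2" using assms(3) by (simp add: fund_sym_l2_def)
  have r: "range (\<lambda>v. (mat 1 - Jp) *v v) = Neg Jp" "range (\<lambda>v. (mat 1 - Jm) *v v) = Neg Jm"
    using range_Neg[OF hp(2)] range_Neg[OF hm(2)] by auto
  show ?thesis
    unfolding r
  proof
    assume "Sigma_J (block_J Jm Jp) op_S \<noteq> {}"
    then obtain B where "B \<in> Sigma_J (block_J Jm Jp) op_S" by blast
    then obtain L where "lagr Jm Jp L" using lagr_of_Sigma[OF hm(2) hp(2) HJ] by blast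
    then show "vec.dim (Neg Jp) = vec.dim (Neg Jm)" by (rule lagr_dim[OF hm hp])
  next
    assume "vec.dim (Neg Jp) = vec.dim (Neg Jm)"
    then obtain L where "lagr Jm Jp L" using lagr_exists[OF hm hp] by blast
    then have "Bset L \<in> Sigma_J (block_J Jm Jp) op_S" by (rule Sigma_of_lagr[OF hm(2) hp(2) HJ])
    then show "Sigma_J (block_J Jm Jp) op_S \<noteq> {}" by blast
  qed
qed


end
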